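(* There is a constant $c>0$ such that for every integer $n\ge 1$, with $N=2^n$, the $2N\times 2N$ unitary matrix $C_N^{\mathrm I}\oplus i\,S_N^{\mathrm I}$ can be realized exactly by a quantum circuit on $n+1$ qubits (plus at most a constant number of ancilla qubits that start and end in $|0\rangle$) consisting of at most $c\,n^2=c\log_2^2 N$ elementary gates. In short, $C_N^{\mathrm I}$ and $S_N^{\mathrm I}$ can be realized with $O(\log^2 N)$ elementary quantum gates.
   Context: Qubit/basis conventions: the state space of $m$ qubits is $\mathbb{C}^{2^m}$ with computational basis $|x\rangle$, $x$ a bit string $b_m\dots b_1$ identified with the integer $\sum_k b_k2^{k-1}$; the most significant bit corresponds to the leftmost tensor factor. A matrix of size $2^m\times 2^m$ acts on this basis indexed by these integers. Elementary gates: (i) a CNOT between any two qubits (negate the target bit iff the control bit is 1), and (ii) any single-qubit gate, i.e. $I_{2^{m-t}}\otimes U\otimes I_{2^{t-1}}$ with $U\in\mathcal U(2)$ arbitrary, acting on qubit $t$. A circuit realizes a unitary $W$ if the product of its gates equals $W$ (on the ancillas, if any, it maps $|0\rangle$ to $|0\rangle$). Direct sum $A\oplus B$ means the block-diagonal matrix $\begin{pmatrix}A&0\\0&B\end{pmatrix}$. Discrete Cosine and Sine transforms of type I: with $k_0=k_N=1/\sqrt2$ and $k_j=1$ for $0<j<N$, $C_N^{\mathrm I}=\sqrt{2/N}\,[k_ik_j\cos(ij\pi/N)]_{i,j=0,\dots,N}$ (size $(N+1)\times(N+1)$) and $S_N^{\mathrm I}=\sqrt{2/N}\,[\sin(ij\pi/N)]_{i,j=1,\dots,N-1}$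 (size $(N-1)\times(N-1)$). Here $i$ in $i\,S_N^{\mathrm I}$ denotes $\sqrt{-1}$. *)

theory Defs
  imports Complex_Main "Jordan_Normal_Form.Matrix"
begin

(* Bit k (k \<ge> 1) of the basis index x: b_k, with x = \<Sum>k b_k 2^(k-1). *)
definition qbit :: "nat \<Rightarrow> nat \<Rightarrow> nat" where
  "qbit x k = (x div 2 ^ (k - 1)) mod 2"

definition unitary2 :: "complex mat \<Rightarrow> bool" where
  "unitary2 U \<longleftrightarrow> U \<in> carrier_mat 2 2 \<and>
     U * mat 2 2 (\<lambda>(i, j). cnj (U $$ (j, i))) = 1\<^sub>m 2"

(* I_{2^(m-t)} \<otimes> U \<otimes> I_{2^(t-1)} acting on qubit t of m qubits *)
definition single_qubit_gate :: "nat \<Rightarrow> nat \<Rightarrow> complex mat \<Rightarrow> complex mat" where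
  "single_qubit_gate m t U = mat (2 ^ m) (2 ^ m) (\<lambda>(x, y).
     if (\<forall>k. k \<ge> 1 \<and> k \<noteq> t \<longrightarrow> qbit x k = qbit y k)
     then U $$ (qbit x t, qbit y t) else 0)"

(* CNOT with control qubit c and target qubit t on m qubits: permutation matrix of
   the basis map y \<mapsto> (flip bit t of y iff bit c of y is 1) *)
definition cnot_gate :: "nat \<Rightarrow> nat \<Rightarrow> nat \<Rightarrow> complex mat" where
  "cnot_gate m c t = mat (2 ^ m) (2 ^ m) (\<lambda>(x, y).
     if x = (if qbit y c = 1 then
               (if qbit y t = 1 then y - 2 ^ (t - 1) else y + 2 ^ (t - 1))
             else y)
     then 1 else 0)"

definition elementary_gate :: "nat \<Rightarrow> complex mat \<Rightarrow> bool" where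
  "elementary_gate m G \<longleftrightarrow>
     (\<exists>c t. 1 \<le> c \<and> c \<le> m \<and> 1 \<le> t \<and> t \<le> m \<and> c \<noteq> t \<and> G = cnot_gate m c t) \<or>
     (\<exists>t U. 1 \<le> t \<and> t \<le> m \<and> unitary2 U \<and> G = single_qubit_gate m t U)"

(* product of the gates of a circuit (first gate of the list is the leftmost factor) *)
definition circuit_product :: "nat \<Rightarrow> complex mat list \<Rightarrow> complex mat" where
  "circuit_product d gs = foldr (*) gs (1\<^sub>m d)"

(* A circuit gs on m + a qubits realizes the 2^m x 2^m matrix W using a ancillas
   (the a most significant qubits): on inputs |0..0>|x> the product maps to |0..0>(W|x>). *)
definition realizes_with_ancillas :: "nat \<Rightarrow> nat \<Rightarrow> complex mat list \<Rightarrow> complex mat \<Rightarrow> bool" where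
  "realizes_with_ancillas m a gs W \<longleftrightarrow>
     (\<forall>g \<in> set gs. elementary_gate (m + a) g) \<and>
     (\<forall>x < 2 ^ m. \<forall>y < 2 ^ (m + a).
        circuit_product (2 ^ (m + a)) gs $$ (y, x) = (if y < 2 ^ m then W $$ (y, x) else 0))"

definition kfac :: "nat \<Rightarrow> nat \<Rightarrow> real" where
  "kfac N j = (if j = 0 \<or> j = N then 1 / sqrt 2 else 1)"

definition DCT1 :: "nat \<Rightarrow> complex mat" where
  "DCT1 N = mat (N + 1) (N + 1) (\<lambda>(i, j).
     complex_of_real (sqrt (2 / real N) * kfac N i * kfac N j * cos (real i * real j * pi / real N)))"

(* S_N^I, size (N-1) x (N-1); matrix entry (i,j) (0-based) is the paper's entry (i+1, j+1) *)
definition DST1 :: "nat \<Rightarrow> complex mat" where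
  "DST1 N = mat (N - 1) (N - 1) (\<lambda>(i, j).
     complex_of_real (sqrt (2 / real N) * sin (real (i + 1) * real (j + 1) * pi / real N)))"

definition direct_sum :: "complex mat \<Rightarrow> complex mat \<Rightarrow> complex mat" where
  "direct_sum A B = four_block_mat A (0\<^sub>m (dim_row A) (dim_col B)) (0\<^sub>m (dim_row B) (dim_col A)) B"

end

theory Submission
  imports Defs
begin


lemma lt_pow_imp: "(x::nat) < 2 ^ m \<Longrightarrow> j \<ge> m \<Longrightarrow> \<not> bit x j"
proof -
  assume a: "x < 2^m" "j \<ge> m"
  have "(2::nat)^m \<le> 2^j" using a(2) by (simp add: power_increasing)
  hence "x < 2^j" using a(1) by linarith
  hence "x div 2^j = 0" by simp
  thus ?thesis by (simp add: bit_iff_odd)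
qed

lemma zero_if_nobits: "(\<forall>j. \<not> bit (x::nat) j) \<Longrightarrow> x = 0"
  by (rule bit_eqI) simp

lemma lt_pow_iff: "(x::nat) < 2 ^ m \<longleftrightarrow> (\<forall>j\<ge>m. \<not> bit x j)"
proof
  assume "x < 2^m" thus "\<forall>j\<ge>m. \<not> bit x j" using lt_pow_imp by blast
next
  assume h: "\<forall>j\<ge>m. \<not> bit x j"
  have "drop_bit m x = 0"
    by (rule zero_if_nobits) (simp add: bit_drop_bit_eq h)
  hence "take_bit m x = x" by (simp add: take_bit_eq_self_iff_drop_bit_eq_0)
  thus "x < 2^m" by (metis take_bit_nat_less_exp)
qed

lemma bits_lt_eq: "(x::nat) < 2^m \<Longrightarrow> y < 2^m \<Longrightarrow> (\<And>j. j < m \<Longrightarrow> bit x j = bit y j) \<Longrightarrow> x = y"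
  by (rule bit_eqI) (metis lt_pow_imp not_le)

definition bv :: "nat \<Rightarrow> nat \<Rightarrow> nat" where "bv x p = (if bit x p then 1 else 0)"
definition agree :: "nat set \<Rightarrow> nat \<Rightarrow> nat \<Rightarrow> bool" where
  "agree S x y \<longleftrightarrow> (\<forall>j. j \<notin> S \<longrightarrow> bit x j = bit y j)"

lemma bv_le1[simp]: "bv x p \<le> 1" by (simp add: bv_def)
lemma bv_lt2[simp]: "bv x p < 2" by (simp add: bv_def)

lemma qbit_bv: "k \<ge> 1 \<Longrightarrow> qbit x k = bv x (k - 1)"
  by (simp add: qbit_def bv_def bit_iff_odd odd_iff_mod_2_eq_one)

lemma bsb: "bit (set_bit p (x::nat)) j \<longleftrightarrow> bit x j \<or> p = j"
  by (simp add: bit_set_bit_iff)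
lemma bub: "bit (unset_bit p (x::nat)) j \<longleftrightarrow> bit x j \<and> p \<noteq> j"
  by (simp add: bit_unset_bit_iff)
lemma bfb: "bit (flip_bit p (x::nat)) j \<longleftrightarrow> (if p = j then \<not> bit x j else bit x j)"
  by (auto simp add: bit_flip_bit_iff)

lemma set_bit_lt: "p < m \<Longrightarrow> (x::nat) < 2^m \<Longrightarrow> set_bit p x < 2^m"
proof (subst lt_pow_iff, intro allI impI)
  fix j assume a: "p < m" "x < 2^m" "m \<le> j"
  hence "\<not> bit x j" using lt_pow_imp by blast
  thus "\<not> bit (set_bit p x) j" using a by (simp add: bsb)
qed
lemma unset_bit_lt: "(x::nat) < 2^m \<Longrightarrow> unset_bit p x < 2^m"
proof (subst lt_pow_iff, intro allI impI)
  fix j assume a: "x < 2^m" "m \<le> j"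
  hence "\<not> bit x j" using lt_pow_imp by blast
  thus "\<not> bit (unset_bit p x) j" using a by (simp add: bub)
qed
lemma flip_bit_lt: "p < m \<Longrightarrow> (x::nat) < 2^m \<Longrightarrow> flip_bit p x < 2^m"
proof (subst lt_pow_iff, intro allI impI)
  fix j assume a: "p < m" "x < 2^m" "m \<le> j"
  hence "\<not> bit x j" using lt_pow_imp by blast
  thus "\<not> bit (flip_bit p x) j" using a by (simp add: bfb)
qed

lemma flip_nat_set: "\<not> bit (y::nat) t \<Longrightarrow> flip_bit t y = y + 2 ^ t"
  unfolding flip_bit_eq_if set_bit_eq by simp

lemma flip_nat_unset: "bit (y::nat) t \<Longrightarrow> flip_bit t y = y - 2 ^ t"
proof -
  assume b: "bit y t"
  have nb: "\<not> bit (flip_bit t y) t" by (simp add: bfb b)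
  have "set_bit t (flip_bit t y) = y"
    by (rule bit_eqI) (auto simp: bsb bfb b)
  moreover have "set_bit t (flip_bit t y) = flip_bit t y + 2^t"
    unfolding set_bit_eq using nb by simp
  ultimately show ?thesis by simp
qed

lemma agree_sym: "agree S x y = agree S y x" by (auto simp: agree_def)
lemma agree_trans: "agree S x y \<Longrightarrow> agree S y z \<Longrightarrow> agree S x z" by (auto simp: agree_def)
lemma agree_mono: "agree S x y \<Longrightarrow> S \<subseteq> T \<Longrightarrow> agree T x y" by (auto simp: agree_def)
lemma agree_refl[simp]: "agree S x x" by (auto simp: agree_def)

lemma agree1_cases: "agree {p} z y \<Longrightarrow> z = unset_bit p y \<or> z = set_bit p y"
proof -
  assume a: "agree {p} z y"
  show ?thesis
  proof (cases "bit z p")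
    case True
    have "z = set_bit p y" by (rule bit_eqI) (use a True in \<open>auto simp: agree_def bsb\<close>)
    thus ?thesis by simp
  next
    case False
    have "z = unset_bit p y" by (rule bit_eqI) (use a False in \<open>auto simp: agree_def bub\<close>)
    thus ?thesis by simp
  qed
qed

lemma unset_ne_set: "unset_bit p (y::nat) \<noteq> set_bit p y"
  by (metis bsb bub)

lemma agree_unset[simp]: "agree {p} (unset_bit p y) y" by (auto simp: agree_def bub)
lemma agree_set[simp]: "agree {p} (set_bit p y) y" by (auto simp: agree_def bsb)
lemma bv_unset[simp]: "bv (unset_bit p y) p = 0" by (simp add: bv_def bub)
lemma bv_set[simp]: "bv (set_bit p y) p = 1" by (simp add: bv_def bsb)

lemma sum_single: "(z0::nat) < d \<Longrightarrow> (\<And>z. z < d \<Longrightarrow> z \<noteq> z0 \<Longrightarrow> g z = 0) \<Longrightarrow> (\<Sum>z<d. g z) = g z0"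
proof -
  assume a: "z0 < d" and h: "\<And>z. z < d \<Longrightarrow> z \<noteq> z0 \<Longrightarrow> g z = 0"
  have "(\<Sum>z<d. g z) = g z0 + (\<Sum>z\<in>{..<d} - {z0}. g z)"
    using a by (intro sum.remove) auto
  also have "(\<Sum>z\<in>{..<d} - {z0}. g z) = 0" by (rule sum.neutral) (use h in auto)
  finally show ?thesis by simp
qed

lemma sum_two: "(a::nat) < d \<Longrightarrow> b < d \<Longrightarrow> a \<noteq> b \<Longrightarrow> (\<And>z. z < d \<Longrightarrow> z \<noteq> a \<Longrightarrow> z \<noteq> b \<Longrightarrow> g z = 0)
   \<Longrightarrow> (\<Sum>z<d. g z) = g a + g b"
proof -
  assume a: "a < d" "b < d" "a \<noteq> b" and h: "\<And>z. z < d \<Longrightarrow> z \<noteq> a \<Longrightarrow> z \<noteq> b \<Longrightarrow> g z = 0"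
  have "(\<Sum>z<d. g z) = g a + (\<Sum>z\<in>{..<d} - {a}. g z)"
    using a by (intro sum.remove) auto
  also have "(\<Sum>z\<in>{..<d} - {a}. g z) = g b + (\<Sum>z\<in>{..<d} - {a} - {b}. g z)"
    using a by (intro sum.remove) auto
  also have "(\<Sum>z\<in>{..<d} - {a} - {b}. g z) = 0" by (rule sum.neutral) (use h in auto)
  finally show ?thesis by simp
qed

lemma mult_ent: "A \<in> carrier_mat d d \<Longrightarrow> B \<in> carrier_mat d d \<Longrightarrow> i < d \<Longrightarrow> j < d \<Longrightarrow>
  (A * B) $$ (i, j) = (\<Sum>k<d. A $$ (i, k) * B $$ (k, j))"
  by (auto simp: index_mult_mat scalar_prod_def lessThan_atLeast0 intro!: sum.cong)

lemma mat_ent_eq: "A \<in> carrier_mat d d \<Longrightarrow> B \<in> carrier_mat d d \<Longrightarrow>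
   (\<And>i j. i < d \<Longrightarrow> j < d \<Longrightarrow> A $$ (i,j) = B $$ (i,j)) \<Longrightarrow> A = B"
  by (rule eq_matI) auto

definition dg :: "nat \<Rightarrow> (nat \<Rightarrow> complex) \<Rightarrow> complex mat" where
  "dg m f = mat (2^m) (2^m) (\<lambda>(x,y). if x = y then f x else 0)"

lemma dg_carrier[simp]: "dg m f \<in> carrier_mat (2^m) (2^m)" by (simp add: dg_def)
lemma dg_ent: "x < 2^m \<Longrightarrow> y < 2^m \<Longrightarrow> dg m f $$ (x,y) = (if x = y then f x else 0)"
  by (simp add: dg_def)

lemma dg_mult_right: "B \<in> carrier_mat (2^m) (2^m) \<Longrightarrow> x < 2^m \<Longrightarrow> y < 2^m \<Longrightarrow>
  (B * dg m f) $$ (x,y) = B $$ (x,y) * f y"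
proof -
  assume a: "B \<in> carrier_mat (2^m) (2^m)" "x < 2^m" "y < 2^m"
  have "(B * dg m f) $$ (x,y) = (\<Sum>k<2^m. B $$ (x,k) * dg m f $$ (k,y))"
    by (rule mult_ent) (use a in auto)
  also have "\<dots> = B $$ (x,y) * dg m f $$ (y,y)" by (rule sum_single) (auto simp: dg_ent a)
  finally show ?thesis by (simp add: dg_ent a)
qed

lemma dg_mult_left: "B \<in> carrier_mat (2^m) (2^m) \<Longrightarrow> x < 2^m \<Longrightarrow> y < 2^m \<Longrightarrow>
  (dg m f * B) $$ (x,y) = f x * B $$ (x,y)"
proof -
  assume a: "B \<in> carrier_mat (2^m) (2^m)" "x < 2^m" "y < 2^m"
  have "(dg m f * B) $$ (x,y) = (\<Sum>k<2^m. dg m f $$ (x,k) * B $$ (k,y))"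
    by (rule mult_ent) (use a in auto)
  also have "\<dots> = dg m f $$ (x,x) * B $$ (x,y)" by (rule sum_single) (auto simp: dg_ent a)
  finally show ?thesis by (simp add: dg_ent a)
qed

lemma dg_mult: "dg m f * dg m g = dg m (\<lambda>x. f x * g x)"
proof (rule mat_ent_eq[of _ "2^m"])
  show "dg m f * dg m g \<in> carrier_mat (2^m) (2^m)" by (rule mult_carrier_mat[OF dg_carrier dg_carrier])
qed (auto simp: dg_mult_left dg_ent)

lemma dg_one: "dg m (\<lambda>x. 1) = 1\<^sub>m (2^m)"
  by (rule mat_ent_eq[of _ "2^m"]) (auto simp: dg_ent)


lemma mult_car[simp]: "A \<in> carrier_mat d d \<Longrightarrow> B \<in> carrier_mat d d \<Longrightarrow> A * B \<in> carrier_mat d d"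
  by (rule mult_carrier_mat)

lemma sqg_cond: "(\<forall>k. 1 \<le> k \<and> k \<noteq> Suc p \<longrightarrow> qbit x k = qbit y k) \<longleftrightarrow> agree {p} x y"
proof
  assume h: "\<forall>k. 1 \<le> k \<and> k \<noteq> Suc p \<longrightarrow> qbit x k = qbit y k"
  show "agree {p} x y" unfolding agree_def
  proof (intro allI impI)
    fix j assume "j \<notin> {p}"
    hence "qbit x (Suc j) = qbit y (Suc j)" using h by auto
    thus "bit x j = bit y j" by (simp add: qbit_bv bv_def split: if_splits)
  qed
next
  assume h: "agree {p} x y"
  show "\<forall>k. 1 \<le> k \<and> k \<noteq> Suc p \<longrightarrow> qbit x k = qbit y k"
  proof (intro allI impI)
    fix k assume k: "1 \<le> k \<and> k \<noteq> Suc p"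
    then obtain j where "k = Suc j" "j \<noteq> p" by (cases k) auto
    thus "qbit x k = qbit y k" using h by (simp add: qbit_bv bv_def agree_def)
  qed
qed

lemma sqg_carrier[simp]: "single_qubit_gate m t U \<in> carrier_mat (2^m) (2^m)"
  by (simp add: single_qubit_gate_def)

lemma sqg_ent: "x < 2^m \<Longrightarrow> y < 2^m \<Longrightarrow>
  single_qubit_gate m (Suc p) U $$ (x,y) = (if agree {p} x y then U $$ (bv x p, bv y p) else 0)"
  unfolding single_qubit_gate_def using sqg_cond[of p x y] by (simp add: qbit_bv)

definition cxf :: "nat \<Rightarrow> nat \<Rightarrow> nat \<Rightarrow> nat" where
  "cxf c t y = (if bit y c then flip_bit t y else y)"

lemma cx_carrier[simp]: "cnot_gate m c t \<in> carrier_mat (2^m) (2^m)"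
  by (simp add: cnot_gate_def)

lemma cx_ent: "x < 2^m \<Longrightarrow> y < 2^m \<Longrightarrow>
  cnot_gate m (Suc c) (Suc t) $$ (x,y) = (if x = cxf c t y then 1 else 0)"
  by (auto simp: cnot_gate_def qbit_bv bv_def cxf_def flip_nat_set flip_nat_unset)

lemma cxf_bit: "c \<noteq> t \<Longrightarrow> bit (cxf c t y) j = (if j = t \<and> bit y c then \<not> bit y j else bit y j)"
  by (auto simp: cxf_def bfb)

lemma cxf_inv[simp]: "c \<noteq> t \<Longrightarrow> cxf c t (cxf c t y) = y"
  by (rule bit_eqI) (auto simp: cxf_bit)

lemma cxf_lt: "t < m \<Longrightarrow> y < 2^m \<Longrightarrow> cxf c t y < 2^m"
  by (simp add: cxf_def flip_bit_lt)

lemma cxf_eq_iff: "c \<noteq> t \<Longrightarrow> (x = cxf c t z) = (z = cxf c t x)"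
  by auto

lemma cx_mult_right: "B \<in> carrier_mat (2^m) (2^m) \<Longrightarrow> t < m \<Longrightarrow> x < 2^m \<Longrightarrow> y < 2^m \<Longrightarrow>
  (B * cnot_gate m (Suc c) (Suc t)) $$ (x,y) = B $$ (x, cxf c t y)"
proof -
  assume a: "B \<in> carrier_mat (2^m) (2^m)" "t < m" "x < 2^m" "y < 2^m"
  have "(B * cnot_gate m (Suc c) (Suc t)) $$ (x,y) = (\<Sum>k<2^m. B $$ (x,k) * cnot_gate m (Suc c) (Suc t) $$ (k,y))"
    by (rule mult_ent) (use a in auto)
  also have "\<dots> = B $$ (x, cxf c t y) * cnot_gate m (Suc c) (Suc t) $$ (cxf c t y,y)"
    by (rule sum_single) (auto simp: cx_ent a cxf_lt)
  finally show ?thesis by (simp add: cx_ent a cxf_lt)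
qed

lemma cx_mult_left: "B \<in> carrier_mat (2^m) (2^m) \<Longrightarrow> t < m \<Longrightarrow> c \<noteq> t \<Longrightarrow> x < 2^m \<Longrightarrow> y < 2^m \<Longrightarrow>
  (cnot_gate m (Suc c) (Suc t) * B) $$ (x,y) = B $$ (cxf c t x, y)"
proof -
  assume a: "B \<in> carrier_mat (2^m) (2^m)" "t < m" "c \<noteq> t" "x < 2^m" "y < 2^m"
  have "(cnot_gate m (Suc c) (Suc t) * B) $$ (x,y) = (\<Sum>k<2^m. cnot_gate m (Suc c) (Suc t) $$ (x,k) * B $$ (k,y))"
    by (rule mult_ent) (use a in auto)
  also have "\<dots> = cnot_gate m (Suc c) (Suc t) $$ (x, cxf c t x) * B $$ (cxf c t x,y)"
    by (rule sum_single) (auto simp: cx_ent a cxf_lt)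
  finally show ?thesis by (simp add: cx_ent a cxf_lt)
qed

lemma sqg_mult_right: "B \<in> carrier_mat (2^m) (2^m) \<Longrightarrow> p < m \<Longrightarrow> x < 2^m \<Longrightarrow> y < 2^m \<Longrightarrow>
  (B * single_qubit_gate m (Suc p) U) $$ (x,y) =
     B $$ (x, unset_bit p y) * U $$ (0, bv y p) + B $$ (x, set_bit p y) * U $$ (1, bv y p)"
proof -
  assume a: "B \<in> carrier_mat (2^m) (2^m)" "p < m" "x < 2^m" "y < 2^m"
  let ?G = "single_qubit_gate m (Suc p) U"
  have "(B * ?G) $$ (x,y) = (\<Sum>k<2^m. B $$ (x,k) * ?G $$ (k,y))"
    by (rule mult_ent) (use a in auto)
  also have "\<dots> = B $$ (x, unset_bit p y) * ?G $$ (unset_bit p y, y) + B $$ (x, set_bit p y) * ?G $$ (set_bit p y, y)"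
    by (rule sum_two) (use a agree1_cases in \<open>auto simp: sqg_ent unset_bit_lt set_bit_lt unset_ne_set\<close>)
  finally show ?thesis using a by (simp add: sqg_ent unset_bit_lt set_bit_lt)
qed

lemma sqg_mult_left: "B \<in> carrier_mat (2^m) (2^m) \<Longrightarrow> p < m \<Longrightarrow> x < 2^m \<Longrightarrow> y < 2^m \<Longrightarrow>
  (single_qubit_gate m (Suc p) U * B) $$ (x,y) =
     U $$ (bv x p, 0) * B $$ (unset_bit p x, y) + U $$ (bv x p, 1) * B $$ (set_bit p x, y)"
proof -
  assume a: "B \<in> carrier_mat (2^m) (2^m)" "p < m" "x < 2^m" "y < 2^m"
  let ?G = "single_qubit_gate m (Suc p) U"
  have "(?G * B) $$ (x,y) = (\<Sum>k<2^m. ?G $$ (x,k) * B $$ (k,y))"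
    by (rule mult_ent) (use a in auto)
  also have "\<dots> = ?G $$ (x, unset_bit p x) * B $$ (unset_bit p x, y) + ?G $$ (x, set_bit p x) * B $$ (set_bit p x, y)"
    by (rule sum_two) (use a agree1_cases agree_sym in \<open>auto simp: sqg_ent unset_bit_lt set_bit_lt unset_ne_set\<close>)
  finally show ?thesis using a by (simp add: sqg_ent unset_bit_lt set_bit_lt agree_sym[of _ x])
qed

lemma mult2: "A \<in> carrier_mat 2 2 \<Longrightarrow> B \<in> carrier_mat 2 2 \<Longrightarrow> i < 2 \<Longrightarrow> j < 2 \<Longrightarrow>
  (A * B) $$ (i,j) = A $$ (i,0) * B $$ (0,j) + A $$ (i,1) * B $$ (1,j)"
proof -
  assume a: "A \<in> carrier_mat 2 2" "B \<in> carrier_mat 2 2" "i < 2" "j < 2"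
  have "(A * B) $$ (i,j) = (\<Sum>k<2. A $$ (i,k) * B $$ (k,j))" by (rule mult_ent) (use a in auto)
  also have "\<dots> = A $$ (i,0) * B $$ (0,j) + A $$ (i,1) * B $$ (1,j)" by (simp add: numeral_2_eq_2)
  finally show ?thesis .
qed

lemma sqg_mult: "U \<in> carrier_mat 2 2 \<Longrightarrow> V \<in> carrier_mat 2 2 \<Longrightarrow> p < m \<Longrightarrow>
  single_qubit_gate m (Suc p) U * single_qubit_gate m (Suc p) V = single_qubit_gate m (Suc p) (U * V)"
proof (rule mat_ent_eq[of _ "2^m"])
  fix x y assume a: "U \<in> carrier_mat 2 2" "V \<in> carrier_mat 2 2" "p < m" "x < (2::nat)^m" "y < (2::nat)^m"
  show "(single_qubit_gate m (Suc p) U * single_qubit_gate m (Suc p) V) $$ (x, y) =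
        single_qubit_gate m (Suc p) (U * V) $$ (x, y)"
  proof (cases "agree {p} x y")
    case True
    have "agree {p} x (unset_bit p y)" "agree {p} x (set_bit p y)"
      using True agree_trans agree_sym agree_unset agree_set by metis+
    moreover have "(U * V) $$ (bv x p, bv y p) = U $$ (bv x p,0) * V $$ (0,bv y p) + U $$ (bv x p,1) * V $$ (1,bv y p)"
      by (rule mult2) (use a in auto)
    ultimately show ?thesis using a True
      by (simp add: sqg_mult_right sqg_ent unset_bit_lt set_bit_lt)
  next
    case False
    have "\<not> agree {p} x (unset_bit p y)" "\<not> agree {p} x (set_bit p y)"
      using False agree_trans agree_sym agree_unset agree_set by metis+
    thus ?thesis using a False
      by (simp add: sqg_mult_right sqg_ent unset_bit_lt set_bit_lt)
  qed
qed auto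

lemma agree1_eq: "agree {p} x y \<Longrightarrow> bv x p = bv y p \<Longrightarrow> x = y"
  by (rule bit_eqI) (auto simp: agree_def bv_def split: if_splits)

lemma sqg_one: "single_qubit_gate m (Suc p) (1\<^sub>m 2) = 1\<^sub>m (2^m)"
proof (rule mat_ent_eq[of _ "2^m"])
  fix x y assume a: "x < (2::nat)^m" "y < (2::nat)^m"
  show "single_qubit_gate m (Suc p) (1\<^sub>m 2) $$ (x, y) = 1\<^sub>m (2 ^ m) $$ (x, y)"
    using a agree1_eq[of p x y] by (auto simp: sqg_ent)
qed auto

datatype gate = Had nat | Phs real nat | Rot real nat | CX nat nat

definition hmat :: "complex mat" where
  "hmat = mat 2 2 (\<lambda>(i,j). if i = 1 \<and> j = 1 then - (1 / sqrt 2) else 1 / sqrt 2)"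
definition phmat :: "real \<Rightarrow> complex mat" where
  "phmat th = mat 2 2 (\<lambda>(i,j). if i = j then (if i = 0 then 1 else cis th) else 0)"
definition rotmat :: "real \<Rightarrow> complex mat" where
  "rotmat ph = mat 2 2 (\<lambda>(i,j). if i = j then of_real (cos ph) else if i = 0 then - of_real (sin ph) else of_real (sin ph))"

fun gmat :: "nat \<Rightarrow> gate \<Rightarrow> complex mat" where
  "gmat m (Had p) = single_qubit_gate m (Suc p) hmat"
| "gmat m (Phs th p) = single_qubit_gate m (Suc p) (phmat th)"
| "gmat m (Rot ph p) = single_qubit_gate m (Suc p) (rotmat ph)"
| "gmat m (CX c t) = cnot_gate m (Suc c) (Suc t)"

fun gok :: "nat \<Rightarrow> gate \<Rightarrow> bool" where
  "gok m (Had p) = (p < m)"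
| "gok m (Phs th p) = (p < m)"
| "gok m (Rot ph p) = (p < m)"
| "gok m (CX c t) = (c < m \<and> t < m \<and> c \<noteq> t)"

fun ginv :: "gate \<Rightarrow> gate" where
  "ginv (Had p) = Had p"
| "ginv (Phs th p) = Phs (- th) p"
| "ginv (Rot ph p) = Rot (- ph) p"
| "ginv (CX c t) = CX c t"

lemma hmat_carrier[simp]: "hmat \<in> carrier_mat 2 2" by (simp add: hmat_def)
lemma phmat_carrier[simp]: "phmat th \<in> carrier_mat 2 2" by (simp add: phmat_def)
lemma rotmat_carrier[simp]: "rotmat th \<in> carrier_mat 2 2" by (simp add: rotmat_def)

lemma mat2_eq: "A \<in> carrier_mat 2 2 \<Longrightarrow> B \<in> carrier_mat 2 2 \<Longrightarrow>
  A $$ (0,0) = B $$ (0,0) \<Longrightarrow> A $$ (0,1) = B $$ (0,1) \<Longrightarrow> A $$ (1,0) = B $$ (1,0) \<Longrightarrow> A $$ (1,1) = B $$ (1,1) \<Longrightarrow> A = B"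
  by (rule eq_matI) (auto simp: less_2_cases_iff)

lemma hh: "hmat * hmat = 1\<^sub>m 2"
proof -
  have s0: "complex_of_real (sqrt 2) * complex_of_real (sqrt 2) = 2"
    by (simp flip: of_real_mult)
  have s: "(1 / complex_of_real (sqrt 2)) * (1 / complex_of_real (sqrt 2)) = 1/2"
    by (simp add: s0)
  show ?thesis by (rule mat2_eq) (auto simp: mult2 hmat_def s s0 simp del: index_mult_mat)
qed

lemma phph: "phmat a * phmat b = phmat (a + b)"
  by (rule mat2_eq) (auto simp: mult2 phmat_def cis_mult simp del: index_mult_mat)

lemma ph0: "phmat 0 = 1\<^sub>m 2"
  by (rule mat2_eq) (auto simp: phmat_def)

lemma rotrot: "rotmat a * rotmat b = rotmat (a + b)"
  by (rule mat2_eq) (auto simp: mult2 rotmat_def cos_add sin_add algebra_simps simp del: index_mult_mat simp flip: of_real_mult of_real_add of_real_diff)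

lemma rot0: "rotmat 0 = 1\<^sub>m 2"
  by (rule mat2_eq) (auto simp: rotmat_def)

lemma gmat_carrier[simp]: "gmat m g \<in> carrier_mat (2^m) (2^m)"
  by (cases g) auto

lemma gmat_inv: "gok m g \<Longrightarrow> gmat m (ginv g) * gmat m g = 1\<^sub>m (2^m)"
proof (cases g)
  case (Had p)
  assume "gok m g" thus ?thesis using Had by (simp add: sqg_mult hh sqg_one)
next
  case (Phs th p)
  assume "gok m g" thus ?thesis using Phs by (simp add: sqg_mult phph ph0 sqg_one)
next
  case (Rot th p)
  assume "gok m g" thus ?thesis using Rot by (simp add: sqg_mult rotrot rot0 sqg_one)
next
  case (CX c t)
  assume g: "gok m g"
  show ?thesis
  proof (rule mat_ent_eq[of _ "2^m"])
    fix x y assume a: "x < (2::nat)^m" "y < (2::nat)^m"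
    show "(gmat m (ginv g) * gmat m g) $$ (x, y) = 1\<^sub>m (2 ^ m) $$ (x, y)"
      using g a CX by (auto simp: cx_mult_left cx_ent cxf_lt) (metis cxf_inv)
  qed (auto simp: CX)
qed

definition adj2 :: "complex mat \<Rightarrow> complex mat" where
  "adj2 U = mat 2 2 (\<lambda>(i, j). cnj (U $$ (j, i)))"

lemma adj2_carrier[simp]: "adj2 U \<in> carrier_mat 2 2" by (simp add: adj2_def)

lemma unitary2_hmat: "unitary2 hmat"
proof -
  have "adj2 hmat = hmat" by (rule mat2_eq) (auto simp: adj2_def hmat_def)
  thus ?thesis by (simp add: unitary2_def adj2_def[symmetric] hh)
qed

lemma unitary2_phmat: "unitary2 (phmat a)"
proof -
  have "adj2 (phmat a) = phmat (-a)" by (rule mat2_eq) (auto simp: adj2_def phmat_def cis_cnj)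
  thus ?thesis by (simp add: unitary2_def adj2_def[symmetric] phph ph0)
qed

lemma unitary2_rotmat: "unitary2 (rotmat a)"
proof -
  have "adj2 (rotmat a) = rotmat (-a)" by (rule mat2_eq) (auto simp: adj2_def rotmat_def)
  thus ?thesis by (simp add: unitary2_def adj2_def[symmetric] rotrot rot0)
qed

lemma sqg_elem: "p < m \<Longrightarrow> unitary2 U \<Longrightarrow> elementary_gate m (single_qubit_gate m (Suc p) U)"
  unfolding elementary_gate_def by (intro disjI2 exI[of _ "Suc p"] exI[of _ U]) auto

lemma cx_elem: "c < m \<Longrightarrow> t < m \<Longrightarrow> c \<noteq> t \<Longrightarrow> elementary_gate m (cnot_gate m (Suc c) (Suc t))"
  unfolding elementary_gate_def by (intro disjI1 exI[of _ "Suc c"] exI[of _ "Suc t"]) auto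

lemma gmat_elem: "gok m g \<Longrightarrow> elementary_gate m (gmat m g)"
  by (cases g) (auto intro: sqg_elem cx_elem simp: unitary2_hmat unitary2_phmat unitary2_rotmat)

definition circ :: "nat \<Rightarrow> gate list \<Rightarrow> complex mat" where
  "circ m gs = circuit_product (2^m) (map (gmat m) gs)"

lemma circ_Nil[simp]: "circ m [] = 1\<^sub>m (2^m)"
  by (simp add: circ_def circuit_product_def)
lemma circ_Cons: "circ m (g # gs) = gmat m g * circ m gs"
  by (simp add: circ_def circuit_product_def)
lemma circ_carrier[simp]: "circ m gs \<in> carrier_mat (2^m) (2^m)"
  by (induction gs) (auto simp: circ_Cons)
lemma circ_single[simp]: "circ m [g] = gmat m g"
  by (simp add: circ_Cons right_mult_one_mat[OF gmat_carrier])
lemma one_mult_circ[simp]: "1\<^sub>m (2^m) * circ m gs = circ m gs"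
  by (rule left_mult_one_mat[OF circ_carrier])
lemma circ_append: "circ m (xs @ ys) = circ m xs * circ m ys"
proof (induction xs)
  case Nil thus ?case by simp
next
  case (Cons g xs)
  have "circ m ((g#xs)@ys) = gmat m g * (circ m xs * circ m ys)" using Cons.IH by (simp add: circ_Cons)
  also have "\<dots> = (gmat m g * circ m xs) * circ m ys"
    by (rule assoc_mult_mat[symmetric, of _ "2^m" "2^m" _ "2^m" _ "2^m"]) auto
  finally show ?case by (simp add: circ_Cons)
qed

definition invc :: "gate list \<Rightarrow> gate list" where "invc gs = rev (map ginv gs)"

lemma circ_inv: "\<forall>g\<in>set gs. gok m g \<Longrightarrow> circ m (invc gs) * circ m gs = 1\<^sub>m (2^m)"
proof (induction gs)
  case Nil thus ?case by (simp add: invc_def)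
next
  case (Cons g gs)
  have e: "invc (g # gs) = invc gs @ [ginv g]" by (simp add: invc_def)
  let ?X = "circ m (invc gs)" and ?G' = "gmat m (ginv g)" and ?G = "gmat m g" and ?Y = "circ m gs"
  have "circ m (invc (g # gs)) * circ m (g # gs) = ?X * ?G' * (?G * ?Y)"
    by (simp add: e circ_append circ_Cons right_mult_one_mat[OF gmat_carrier])
  also have "\<dots> = ?X * (?G' * (?G * ?Y))"
    by (rule assoc_mult_mat[of _ "2^m" "2^m" _ "2^m" _ "2^m"]) auto
  also have "?G' * (?G * ?Y) = (?G' * ?G) * ?Y"
    by (rule assoc_mult_mat[symmetric, of _ "2^m" "2^m" _ "2^m" _ "2^m"]) auto
  also have "?G' * ?G = 1\<^sub>m (2^m)" using Cons by (simp add: gmat_inv)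
  finally show ?case using Cons by simp
qed

lemma invc_ok: "\<forall>g\<in>set gs. gok m g \<Longrightarrow> \<forall>g\<in>set (invc gs). gok m g"
proof -
  have "gok m g \<Longrightarrow> gok m (ginv g)" for g by (cases g) auto
  thus "\<forall>g\<in>set gs. gok m g \<Longrightarrow> \<forall>g\<in>set (invc gs). gok m g" by (auto simp: invc_def)
qed

lemma length_invc[simp]: "length (invc gs) = length gs" by (simp add: invc_def)

lemma phs_dg: "gmat m (Phs th p) = dg m (\<lambda>x. if bit x p then cis th else 1)"
proof (rule mat_ent_eq[of _ "2^m"])
  fix x y assume a: "x < (2::nat)^m" "y < (2::nat)^m"
  show "gmat m (Phs th p) $$ (x, y) = dg m (\<lambda>x. if bit x p then cis th else 1) $$ (x, y)"
    using a agree1_eq[of p x y] by (auto simp: sqg_ent dg_ent phmat_def bv_def)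
qed auto


definition cpc :: "real \<Rightarrow> nat \<Rightarrow> nat \<Rightarrow> gate list" where
  "cpc th c t = [Phs (th/2) c, Phs (th/2) t, CX c t, Phs (-th/2) t, CX c t]"

lemma one_ent: "x < d \<Longrightarrow> y < d \<Longrightarrow> (1\<^sub>m d :: complex mat) $$ (x,y) = (if x = y then 1 else 0)"
  by simp

lemma sqg_ph: "single_qubit_gate m (Suc p) (phmat th) = dg m (\<lambda>x. if bit x p then cis th else 1)"
  using phs_dg[of m th p] by simp

lemma cis_bv: "(if bit x p then cis a else 1) = cis (a * bv x p)"
  by (simp add: bv_def)

lemma cpc_dg: "c < m \<Longrightarrow> t < m \<Longrightarrow> c \<noteq> t \<Longrightarrow>
  circ m (cpc th c t) = dg m (\<lambda>x. cis (th * bv x c * bv x t))"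
proof (rule mat_ent_eq[of _ "2^m"])
  fix x y assume a: "c < m" "t < m" "c \<noteq> t" "x < (2::nat)^m" "y < (2::nat)^m"
  have cl: "cxf c t x < 2^m" using a by (simp add: cxf_lt)
  have e: "circ m (cpc th c t) $$ (x,y) =
     (if bit x c then cis (th/2) else 1) * ((if bit x t then cis (th/2) else 1) *
       ((if bit (cxf c t x) t then cis (-th/2) else 1) * (if cxf c t (cxf c t x) = y then 1 else 0)))"
    using a cl by (simp add: cpc_def circ_Cons sqg_ph dg_mult_left cx_mult_left cxf_lt)
  show "circ m (cpc th c t) $$ (x, y) = dg m (\<lambda>x. cis (th * bv x c * bv x t)) $$ (x, y)"
    unfolding e using a
    by (cases "bit x c"; cases "bit x t") (auto simp: dg_ent cxf_bit bv_def cis_mult)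
qed (auto simp: cpc_def circ_Cons)

lemma gok_cpc: "c < m \<Longrightarrow> t < m \<Longrightarrow> c \<noteq> t \<Longrightarrow> \<forall>g\<in>set (cpc th c t). gok m g"
  by (auto simp: cpc_def)

lemma length_cpc[simp]: "length (cpc th c t) = 5" by (simp add: cpc_def)

fun val :: "nat list \<Rightarrow> nat \<Rightarrow> nat" where
  "val [] x = 0"
| "val (q # qs) x = bv x q + 2 * val qs x"

lemma val_append1: "val (qs @ [q]) x = val qs x + 2 ^ length qs * bv x q"
  by (induction qs) auto

lemma val_lt: "val qs x < 2 ^ length qs"
proof (induction qs)
  case Nil thus ?case by simp
next
  case (Cons q qs)
  have "bv x q \<le> 1" by (simp add: bv_def)
  thus ?case using Cons by simp
qed

lemma val_cong: "(\<And>p. p \<in> set qs \<Longrightarrow> bit x p = bit y p) \<Longrightarrow> val qs x = val qs y"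
  by (induction qs) (auto simp: bv_def)

lemma agree_val: "agree S x y \<Longrightarrow> set qs \<inter> S = {} \<Longrightarrow> val qs x = val qs y"
  by (rule val_cong) (auto simp: agree_def)

fun phl :: "real \<Rightarrow> nat list \<Rightarrow> gate list" where
  "phl a [] = []"
| "phl a (p # ps) = Phs a p # phl (2 * a) ps"

fun cphl :: "real \<Rightarrow> nat \<Rightarrow> nat list \<Rightarrow> gate list" where
  "cphl a c [] = []"
| "cphl a c (p # ps) = cpc a c p @ cphl (2 * a) c ps"

lemma dg_cong: "(\<And>x. f x = g x) \<Longrightarrow> dg m f = dg m g" by metis

lemma phl_dg: "\<forall>p\<in>set ps. p < m \<Longrightarrow> circ m (phl a ps) = dg m (\<lambda>x. cis (a * val ps x))"
proof (induction ps arbitrary: a)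
  case Nil thus ?case by (simp add: dg_one)
next
  case (Cons p ps)
  have "circ m (phl a (p # ps)) = dg m (\<lambda>x. cis (a * bv x p)) * dg m (\<lambda>x. cis (2 * a * val ps x))"
    using Cons by (simp add: circ_Cons sqg_ph cis_bv)
  also have "\<dots> = dg m (\<lambda>x. cis (a * val (p # ps) x))"
    by (simp add: dg_mult cis_mult algebra_simps)
  finally show ?case .
qed

lemma cphl_dg: "c < m \<Longrightarrow> \<forall>p\<in>set ps. p < m \<and> p \<noteq> c \<Longrightarrow>
  circ m (cphl a c ps) = dg m (\<lambda>x. cis (a * bv x c * val ps x))"
proof (induction ps arbitrary: a)
  case Nil thus ?case by (simp add: dg_one)
next
  case (Cons p ps)
  have "circ m (cphl a c (p # ps)) = dg m (\<lambda>x. cis (a * bv x c * bv x p)) * dg m (\<lambda>x. cis (2 * a * bv x c * val ps x))"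
    using Cons by (simp add: circ_append cpc_dg)
  also have "\<dots> = dg m (\<lambda>x. cis (a * bv x c * val (p # ps) x))"
    by (simp add: dg_mult cis_mult algebra_simps)
  finally show ?case .
qed

lemma gok_phl: "\<forall>p\<in>set ps. p < m \<Longrightarrow> \<forall>g\<in>set (phl a ps). gok m g"
  by (induction ps arbitrary: a) auto
lemma gok_cphl: "c < m \<Longrightarrow> \<forall>p\<in>set ps. p < m \<and> p \<noteq> c \<Longrightarrow> \<forall>g\<in>set (cphl a c ps). gok m g"
  by (induction ps arbitrary: a) (auto simp: cpc_def)
lemma length_phl[simp]: "length (phl a ps) = length ps"
  by (induction ps arbitrary: a) auto
lemma length_cphl[simp]: "length (cphl a c ps) = 5 * length ps"
  by (induction ps arbitrary: a) auto


section \<open>QFT\<close>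

lemma cis_period: "n \<in> \<int> \<Longrightarrow> cis (a + 2 * pi * n) = cis a"
  by (simp add: cis_mult[symmetric])

fun qftr :: "nat list \<Rightarrow> gate list" where
  "qftr [] = []"
| "qftr (q # rqs) = qftr rqs @ (cphl (2 * pi / 2 ^ Suc (length rqs)) q (rev rqs) @ [Had q])"

definition qft :: "nat list \<Rightarrow> gate list" where "qft qs = qftr (rev qs)"

lemma qft_Nil[simp]: "qft [] = []" by (simp add: qft_def)
lemma qft_snoc: "qft (qs @ [q]) = qft qs @ (cphl (2 * pi / 2 ^ Suc (length qs)) q qs @ [Had q])"
  by (simp add: qft_def)

definition QF :: "nat \<Rightarrow> nat list \<Rightarrow> complex mat" where
  "QF m qs = mat (2^m) (2^m) (\<lambda>(x,y). if agree (set qs) x y then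
      complex_of_real (1 / sqrt (2 ^ length qs)) *
      cis (2 * pi * real (val (rev qs) x) * real (val qs y) / 2 ^ length qs) else 0)"

lemma QF_carrier[simp]: "QF m qs \<in> carrier_mat (2^m) (2^m)" by (simp add: QF_def)
lemma QF_ent: "x < 2^m \<Longrightarrow> y < 2^m \<Longrightarrow> QF m qs $$ (x,y) = (if agree (set qs) x y then
      complex_of_real (1 / sqrt (2 ^ length qs)) *
      cis (2 * pi * real (val (rev qs) x) * real (val qs y) / 2 ^ length qs) else 0)"
  by (simp add: QF_def)

lemma agree_empty: "agree {} x y \<longleftrightarrow> x = y"
  by (auto simp: agree_def bit_eq_iff)

lemma hmat_ent: "b < 2 \<Longrightarrow> b' < 2 \<Longrightarrow> hmat $$ (b, b') = complex_of_real (1 / sqrt 2) * cis (pi * b * b')"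
  by (auto simp: hmat_def less_2_cases_iff)

lemma bv_bit: "bit x q \<Longrightarrow> bv x q = 1" "\<not> bit x q \<Longrightarrow> bv x q = 0" by (auto simp: bv_def)

lemma stage_exp:
  fixes R V bx yb k :: nat
  shows "complex_of_real (1 / sqrt (2 ^ k)) * cis (2 * pi * R * V / 2 ^ k) *
       cis (2 * pi / 2 ^ Suc k * bx * V) * (complex_of_real (1 / sqrt 2) * cis (pi * bx * yb)) =
     complex_of_real (1 / sqrt (2 ^ Suc k)) * cis (2 * pi * (bx + 2 * R) * (V + 2 ^ k * yb) / 2 ^ Suc k)"
proof -
  have s: "complex_of_real (1 / sqrt (2 ^ k)) * complex_of_real (1 / sqrt 2) = complex_of_real (1 / sqrt (2 ^ Suc k))"
    by (simp add: real_sqrt_mult flip: of_real_mult)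
  have t: "2 * pi * (bx + 2 * R) * (V + 2 ^ k * yb) / 2 ^ Suc k =
        (2 * pi * R * V / 2 ^ k + 2 * pi / 2 ^ Suc k * bx * V + pi * bx * yb) + 2 * pi * (R * yb)"
    by (simp add: field_simps)
  have c: "cis (2 * pi * (bx + 2 * R) * (V + 2 ^ k * yb) / 2 ^ Suc k) =
        cis (2 * pi * R * V / 2 ^ k + 2 * pi / 2 ^ Suc k * bx * V + pi * bx * yb)"
    unfolding t by (rule cis_period) (metis Ints_of_nat of_nat_mult)
  have "complex_of_real (1 / sqrt (2 ^ k)) * cis (2 * pi * R * V / 2 ^ k) *
       cis (2 * pi / 2 ^ Suc k * bx * V) * (complex_of_real (1 / sqrt 2) * cis (pi * bx * yb)) =
       (complex_of_real (1 / sqrt (2 ^ k)) * complex_of_real (1 / sqrt 2)) *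
       (cis (2 * pi * R * V / 2 ^ k) * cis (2 * pi / 2 ^ Suc k * bx * V) * cis (pi * bx * yb))"
    by (simp only: ac_simps)
  also have "cis (2 * pi * R * V / 2 ^ k) * cis (2 * pi / 2 ^ Suc k * bx * V) * cis (pi * bx * yb) =
     cis (2 * pi * R * V / 2 ^ k + 2 * pi / 2 ^ Suc k * bx * V + pi * bx * yb)"
    by (simp only: cis_mult)
  finally show ?thesis by (simp only: s c)
qed

lemma agree_snoc_set: "agree (set (qs @ [q])) x y \<Longrightarrow> bit x q \<Longrightarrow> agree (set qs) x (set_bit q y)"
  by (auto simp: agree_def bsb)
lemma agree_snoc_unset: "agree (set (qs @ [q])) x y \<Longrightarrow> \<not> bit x q \<Longrightarrow> agree (set qs) x (unset_bit q y)"
  by (auto simp: agree_def bub)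
lemma nagree_set: "q \<notin> set qs \<Longrightarrow> \<not> bit x q \<Longrightarrow> \<not> agree (set qs) x (set_bit q y)"
  by (auto simp: agree_def bsb)
lemma nagree_unset: "q \<notin> set qs \<Longrightarrow> bit x q \<Longrightarrow> \<not> agree (set qs) x (unset_bit q y)"
  by (auto simp: agree_def bub)
lemma nagree_snoc: "\<not> agree (set (qs @ [q])) x y \<Longrightarrow> \<not> agree (set qs) x (set_bit q y) \<and> \<not> agree (set qs) x (unset_bit q y)"
  by (auto simp: agree_def bsb bub)
lemma val_set_other: "q \<notin> set qs \<Longrightarrow> val qs (set_bit q y) = val qs y"
  by (rule val_cong) (auto simp: bsb)
lemma val_unset_other: "q \<notin> set qs \<Longrightarrow> val qs (unset_bit q y) = val qs y"
  by (rule val_cong) (auto simp: bub)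

lemma qft_QF: "distinct qs \<Longrightarrow> \<forall>p\<in>set qs. p < m \<Longrightarrow> circ m (qft qs) = QF m qs"
proof (induction qs rule: rev_induct)
  case Nil
  show ?case
  proof (rule mat_ent_eq[of _ "2^m"])
    fix x y assume "x < (2::nat)^m" "y < (2::nat)^m"
    thus "circ m (qft []) $$ (x,y) = QF m [] $$ (x,y)" by (simp add: QF_ent agree_empty)
  qed auto
next
  case (snoc q qs)
  let ?k = "length qs"
  have d: "distinct qs" "q \<notin> set qs" and b: "\<forall>p\<in>set qs. p < m" "q < m" using snoc.prems by auto
  have IH: "circ m (qft qs) = QF m qs" using snoc.IH d b by simp
  let ?D = "dg m (\<lambda>x. cis (2 * pi / 2 ^ Suc ?k * bv x q * val qs x))"
  let ?G = "single_qubit_gate m (Suc q) hmat"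
  have bq: "\<forall>p\<in>set qs. p < m \<and> p \<noteq> q" using b d by auto
  have "circ m (qft (qs @ [q])) = QF m qs * (?D * ?G)"
    using b bq by (simp add: qft_snoc circ_append IH cphl_dg)
  also have "\<dots> = (QF m qs * ?D) * ?G"
    by (rule assoc_mult_mat[symmetric, of _ "2^m" "2^m" _ "2^m" _ "2^m"]) auto
  finally have c: "circ m (qft (qs @ [q])) = (QF m qs * ?D) * ?G" .
  show ?case
  proof (rule mat_ent_eq[of _ "2^m"])
    fix x y assume xy: "x < (2::nat)^m" "y < (2::nat)^m"
    have us: "unset_bit q y < 2^m" "set_bit q y < 2^m" using xy b by (auto simp: unset_bit_lt set_bit_lt)
    have e: "circ m (qft (qs @ [q])) $$ (x,y) =
       QF m qs $$ (x, unset_bit q y) * cis (2 * pi / 2 ^ Suc ?k * bv (unset_bit q y) q * val qs (unset_bit q y)) * hmat $$ (0, bv y q) +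
       QF m qs $$ (x, set_bit q y) * cis (2 * pi / 2 ^ Suc ?k * bv (set_bit q y) q * val qs (set_bit q y)) * hmat $$ (1, bv y q)"
      unfolding c using xy b us by (simp add: sqg_mult_right dg_mult_right)
    show "circ m (qft (qs @ [q])) $$ (x,y) = QF m (qs @ [q]) $$ (x,y)"
    proof (cases "agree (set (qs @ [q])) x y")
      case False
      thus ?thesis unfolding e using nagree_snoc[OF False] xy us by (simp add: QF_ent)
    next
      case True
      have rhs: "QF m (qs @ [q]) $$ (x,y) = complex_of_real (1 / sqrt (2 ^ Suc ?k)) *
          cis (2 * pi * (real (bv x q) + 2 * real (val (rev qs) x)) * (real (val qs y) + 2 ^ ?k * real (bv y q)) / 2 ^ Suc ?k)"
        using True xy by (simp add: QF_ent val_append1)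
      show ?thesis
      proof (cases "bit x q")
        case bx: True
        have "circ m (qft (qs @ [q])) $$ (x,y) =
          complex_of_real (1 / sqrt (2 ^ ?k)) * cis (2 * pi * real (val (rev qs) x) * real (val qs y) / 2 ^ ?k) *
          cis (2 * pi / 2 ^ Suc ?k * real (bv x q) * real (val qs y)) *
          (complex_of_real (1 / sqrt 2) * cis (pi * real (bv x q) * real (bv y q)))"
          unfolding e using xy us bx d agree_snoc_set[OF True bx] nagree_unset[OF d(2) bx]
          by (simp add: QF_ent val_set_other hmat_ent bv_bit)
        thus ?thesis unfolding rhs using stage_exp[where R="val (rev qs) x" and V="val qs y" and bx="bv x q" and yb="bv y q" and k="?k"] by simp
      next
        case bx: False
        have "circ m (qft (qs @ [q])) $$ (x,y) =
          complex_of_real (1 / sqrt (2 ^ ?k)) * cis (2 * pi * real (val (rev qs) x) * real (val qs y) / 2 ^ ?k) *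
          cis (2 * pi / 2 ^ Suc ?k * real (bv x q) * real (val qs y)) *
          (complex_of_real (1 / sqrt 2) * cis (pi * real (bv x q) * real (bv y q)))"
          unfolding e using xy us bx d agree_snoc_unset[OF True bx] nagree_set[OF d(2) bx]
          by (simp add: QF_ent val_unset_other hmat_ent bv_bit)
        thus ?thesis unfolding rhs using stage_exp[where R="val (rev qs) x" and V="val qs y" and bx="bv x q" and yb="bv y q" and k="?k"] by simp
      qed
    qed
  qed auto
qed

lemma gok_qft: "distinct qs \<Longrightarrow> \<forall>p\<in>set qs. p < m \<Longrightarrow> \<forall>g\<in>set (qft qs). gok m g"
proof (induction qs rule: rev_induct)
  case Nil thus ?case by simp
next
  case (snoc q qs)
  have bq: "\<forall>p\<in>set qs. p < m \<and> p \<noteq> q" using snoc.prems by auto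
  have "\<forall>g\<in>set (cphl a q qs). gok m g" for a using gok_cphl[OF _ bq] snoc.prems by auto
  thus ?case using snoc by (auto simp: qft_snoc)
qed

lemma length_qft: "length (qft qs) \<le> 3 * length qs ^ 2"
proof (induction qs rule: rev_induct)
  case Nil thus ?case by simp
next
  case (snoc q qs)
  have "length (qft (qs @ [q])) = length (qft qs) + 5 * length qs + 1" by (simp add: qft_snoc)
  also have "\<dots> \<le> 3 * length qs ^ 2 + 5 * length qs + 1" using snoc by simp
  also have "\<dots> \<le> 3 * length (qs @ [q]) ^ 2" by (simp add: power2_eq_square algebra_simps)
  finally show ?case .
qed


definition pm :: "nat \<Rightarrow> (nat \<Rightarrow> nat) \<Rightarrow> complex mat" where
  "pm m f = mat (2^m) (2^m) (\<lambda>(x,y). if x = f y then 1 else 0)"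

lemma pm_carrier[simp]: "pm m f \<in> carrier_mat (2^m) (2^m)" by (simp add: pm_def)
lemma pm_ent: "x < 2^m \<Longrightarrow> y < 2^m \<Longrightarrow> pm m f $$ (x,y) = (if x = f y then 1 else 0)"
  by (simp add: pm_def)

lemma pm_mult_right: "B \<in> carrier_mat (2^m) (2^m) \<Longrightarrow> x < 2^m \<Longrightarrow> y < 2^m \<Longrightarrow> f y < 2^m \<Longrightarrow>
  (B * pm m f) $$ (x,y) = B $$ (x, f y)"
proof -
  assume a: "B \<in> carrier_mat (2^m) (2^m)" "x < 2^m" "y < 2^m" "f y < 2^m"
  have "(B * pm m f) $$ (x,y) = (\<Sum>k<2^m. B $$ (x,k) * pm m f $$ (k,y))"
    by (rule mult_ent) (use a in auto)
  also have "\<dots> = B $$ (x, f y) * pm m f $$ (f y,y)"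
    by (rule sum_single) (auto simp: pm_ent a)
  finally show ?thesis by (simp add: pm_ent a)
qed

lemma pm_mult: "(\<And>y. y < 2^m \<Longrightarrow> g y < 2^m) \<Longrightarrow> pm m f * pm m g = pm m (\<lambda>y. f (g y))"
proof (rule mat_ent_eq[of _ "2^m"])
  fix x y assume a: "\<And>y. y < 2^m \<Longrightarrow> g y < 2^m" "x < (2::nat)^m" "y < (2::nat)^m"
  show "(pm m f * pm m g) $$ (x, y) = pm m (\<lambda>y. f (g y)) $$ (x, y)"
    using a by (simp add: pm_mult_right pm_ent)
qed auto

definition swapc :: "nat \<Rightarrow> nat \<Rightarrow> gate list" where "swapc a b = [CX a b, CX b a, CX a b]"

definition swp :: "nat \<Rightarrow> nat \<Rightarrow> nat \<Rightarrow> nat" where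
  "swp a b y = (if bit y a = bit y b then y else flip_bit a (flip_bit b y))"

lemma bit_swp: "bit (swp a b y) j = bit y (if j = a then b else if j = b then a else j)"
  by (auto simp: swp_def bfb)

lemma swp_lt: "a < m \<Longrightarrow> b < m \<Longrightarrow> y < 2^m \<Longrightarrow> swp a b y < 2^m"
  by (simp add: swp_def flip_bit_lt)

lemma swp_swp: "swp a b (swp a b y) = y"
  by (rule bit_eqI) (auto simp: bit_swp)

lemma cx3: "a \<noteq> b \<Longrightarrow> cxf a b (cxf b a (cxf a b x)) = swp a b x"
  by (rule bit_eqI) (auto simp: cxf_bit bit_swp)

lemma circ_swapc: "a < m \<Longrightarrow> b < m \<Longrightarrow> a \<noteq> b \<Longrightarrow> circ m (swapc a b) = pm m (swp a b)"
proof (rule mat_ent_eq[of _ "2^m"])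
  fix x y assume a: "a < m" "b < m" "a \<noteq> b" "x < (2::nat)^m" "y < (2::nat)^m"
  have "circ m (swapc a b) $$ (x,y) = (if cxf a b (cxf b a (cxf a b x)) = y then 1 else 0)"
    using a by (simp add: swapc_def circ_Cons cx_mult_left cxf_lt)
  also have "\<dots> = pm m (swp a b) $$ (x,y)" using a by (auto simp: cx3 pm_ent swp_swp)
  finally show "circ m (swapc a b) $$ (x,y) = pm m (swp a b) $$ (x,y)" .
qed auto

function revb :: "nat list \<Rightarrow> nat \<Rightarrow> nat" where
  "revb [] y = y"
| "revb [q] y = y"
| "revb (q # q2 # qs) y = swp q (last (q2 # qs)) (revb (butlast (q2 # qs)) y)"
  by pat_completeness auto
termination by (relation "measure (\<lambda>(qs, y). length qs)") auto

function swn :: "nat list \<Rightarrow> gate list" where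
  "swn [] = []"
| "swn [q] = []"
| "swn (q # q2 # qs) = swapc q (last (q2 # qs)) @ swn (butlast (q2 # qs))"
  by pat_completeness auto
termination by (relation "measure length") auto

lemma snoc_ex: "\<exists>mid l. q2 # qs = mid @ [l]"
  by (metis list.distinct(1) rev_exhaust)

lemma revb3: "q2 # qs = mid @ [l] \<Longrightarrow> revb (q # q2 # qs) y = swp q l (revb mid y)"
proof -
  assume e: "q2 # qs = mid @ [l]"
  have "revb (q # q2 # qs) y = swp q (last (q2 # qs)) (revb (butlast (q2 # qs)) y)" by (rule revb.simps(3))
  also have "\<dots> = swp q l (revb mid y)" by (simp only: e last_snoc butlast_snoc)
  finally show ?thesis .
qed

lemma swn3: "q2 # qs = mid @ [l] \<Longrightarrow> swn (q # q2 # qs) = swapc q l @ swn mid"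
proof -
  assume e: "q2 # qs = mid @ [l]"
  have "swn (q # q2 # qs) = swapc q (last (q2 # qs)) @ swn (butlast (q2 # qs))" by (rule swn.simps(3))
  also have "\<dots> = swapc q l @ swn mid" by (simp only: e last_snoc butlast_snoc)
  finally show ?thesis .
qed

lemma set3: "q2 # qs = mid @ [l] \<Longrightarrow> set (q2 # qs) = insert l (set mid)"
  by auto

lemma revb_out: "j \<notin> set qs \<Longrightarrow> bit (revb qs y) j = bit y j"
proof (induction qs y rule: revb.induct)
  case (3 q q2 qs y)
  obtain mid l where e: "q2 # qs = mid @ [l]" using snoc_ex[of q2 qs] by blast
  have IH: "j \<notin> set mid \<Longrightarrow> bit (revb mid y) j = bit y j" using 3(1) e by simp
  have j: "j \<notin> set mid" "j \<noteq> q" "j \<noteq> l" using 3(2) set3[OF e] by auto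
  show ?case unfolding revb3[OF e] using IH j by (simp add: bit_swp)
qed auto

lemma revb_lt: "\<forall>p\<in>set qs. p < m \<Longrightarrow> y < 2^m \<Longrightarrow> revb qs y < 2^m"
  unfolding lt_pow_iff using revb_out by (metis not_le)

lemma dist3: "distinct (q # q2 # qs) \<Longrightarrow> q2 # qs = mid @ [l] \<Longrightarrow>
   distinct mid \<and> q \<notin> set mid \<and> l \<notin> set mid \<and> q \<noteq> l"
proof -
  assume a: "distinct (q # q2 # qs)" and e: "q2 # qs = mid @ [l]"
  have "distinct (q # mid @ [l])" using a e by metis
  thus ?thesis by auto
qed

lemma circ_swn: "distinct qs \<Longrightarrow> \<forall>p\<in>set qs. p < m \<Longrightarrow> circ m (swn qs) = pm m (revb qs)"
proof (induction qs rule: swn.induct)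
  case 1 thus ?case by (simp add: pm_def one_mat_def)
next
  case (2 q) thus ?case by (simp add: pm_def one_mat_def)
next
  case (3 q q2 qs)
  obtain mid l where e: "q2 # qs = mid @ [l]" using snoc_ex[of q2 qs] by blast
  have d: "distinct mid" "q \<notin> set mid" "l \<notin> set mid" "q \<noteq> l" using dist3[OF 3(2) e] by auto
  have b: "\<forall>p\<in>set mid. p < m" "q < m" "l < m" using 3(3) set3[OF e] by auto
  have IH: "circ m (swn mid) = pm m (revb mid)" using 3(1) e d b by (simp only: last_snoc butlast_snoc)
  have "circ m (swn (q # q2 # qs)) = pm m (swp q l) * pm m (revb mid)"
    unfolding swn3[OF e] using d b by (simp add: circ_append circ_swapc IH)
  also have "\<dots> = pm m (\<lambda>y. swp q l (revb mid y))"
    using b by (simp add: pm_mult revb_lt)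
  also have r: "(\<lambda>y. swp q l (revb mid y)) = revb (q # q2 # qs)" by (rule ext) (rule revb3[OF e, symmetric])
  finally show ?case by (simp only: r)
qed

lemma length_swn: "length (swn qs) \<le> 3 * length qs"
proof (induction qs rule: swn.induct)
  case (3 q q2 qs)
  obtain mid l where e: "q2 # qs = mid @ [l]" using snoc_ex[of q2 qs] by blast
  have IH: "length (swn mid) \<le> 3 * length mid" using 3 e by simp
  have "length (q # q2 # qs) = length mid + 2" using e by (metis length_Cons length_append_singleton add_2_eq_Suc')
  thus ?case unfolding swn3[OF e] using IH by (simp add: swapc_def)
qed auto

lemma gok_swn: "distinct qs \<Longrightarrow> \<forall>p\<in>set qs. p < m \<Longrightarrow> \<forall>g\<in>set (swn qs). gok m g"
proof (induction qs rule: swn.induct)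
  case (3 q q2 qs)
  obtain mid l where e: "q2 # qs = mid @ [l]" using snoc_ex[of q2 qs] by blast
  have d: "distinct mid" "q \<notin> set mid" "l \<notin> set mid" "q \<noteq> l" using dist3[OF 3(2) e] by auto
  have b: "\<forall>p\<in>set mid. p < m" "q < m" "l < m" using 3(3) set3[OF e] by auto
  have IH0: "\<forall>g\<in>set (swn (butlast (q2 # qs))). gok m g"
    by (rule 3(1)) (use e d b in simp_all)
  hence IH: "\<forall>g\<in>set (swn mid). gok m g" using e by simp
  show ?case unfolding swn3[OF e] using IH d b by (auto simp: swapc_def)
qed auto

lemma val_revb: "distinct qs \<Longrightarrow> val (rev qs) (revb qs y) = val qs y"
proof (induction qs y rule: revb.induct)
  case (3 q q2 qs y)
  obtain mid l where e: "q2 # qs = mid @ [l]" using snoc_ex[of q2 qs] by blast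
  have d: "distinct mid" "q \<notin> set mid" "l \<notin> set mid" "q \<noteq> l" using dist3[OF 3(2) e] by auto
  have IH: "val (rev mid) (revb mid y) = val mid y" using 3(1) e d by (simp only: last_snoc butlast_snoc)
  let ?z = "swp q l (revb mid y)"
  have v1: "val (rev mid) ?z = val (rev mid) (revb mid y)"
    by (rule val_cong) (use d in \<open>auto simp: bit_swp\<close>)
  have b1: "bv ?z l = bv y q" using d by (simp add: bv_def bit_swp revb_out)
  have b2: "bv ?z q = bv y l" using d by (simp add: bv_def bit_swp revb_out)
  have "val (rev (q # q2 # qs)) (revb (q # q2 # qs) y) = val (rev (q # mid @ [l])) ?z"
    unfolding revb3[OF e] by (simp only: e)
  also have "\<dots> = bv ?z l + 2 * (val (rev mid) ?z + 2 ^ length mid * bv ?z q)"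
    by (simp add: val_append1)
  also have "\<dots> = bv y q + 2 * (val mid y + 2 ^ length mid * bv y l)"
    using v1 IH b1 b2 by simp
  also have "\<dots> = val (q # mid @ [l]) y" by (simp add: val_append1)
  also have "\<dots> = val (q # q2 # qs) y" by (simp only: e)
  finally show ?case .
qed auto

section \<open>DFT\<close>

definition DF :: "nat \<Rightarrow> nat list \<Rightarrow> complex mat" where
  "DF m qs = mat (2^m) (2^m) (\<lambda>(x,y). if agree (set qs) x y then
      complex_of_real (1 / sqrt (2 ^ length qs)) *
      cis (2 * pi * real (val qs x) * real (val qs y) / 2 ^ length qs) else 0)"

definition dftc :: "nat list \<Rightarrow> gate list" where "dftc qs = qft (rev qs) @ swn qs"

lemma agree_revb: "agree (set qs) x (revb qs y) = agree (set qs) x y"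
  by (auto simp: agree_def revb_out)

lemma dftc_DF: "distinct qs \<Longrightarrow> \<forall>p\<in>set qs. p < m \<Longrightarrow> circ m (dftc qs) = DF m qs"
proof (rule mat_ent_eq[of _ "2^m"])
  fix x y assume a: "distinct qs" "\<forall>p\<in>set qs. p < m" "x < (2::nat)^m" "y < (2::nat)^m"
  have "circ m (dftc qs) = QF m (rev qs) * pm m (revb qs)"
    using a by (simp add: dftc_def circ_append qft_QF circ_swn)
  hence "circ m (dftc qs) $$ (x,y) = QF m (rev qs) $$ (x, revb qs y)"
    using a by (simp add: pm_mult_right revb_lt)
  also have "\<dots> = DF m qs $$ (x,y)"
    using a by (simp add: QF_ent DF_def revb_lt agree_revb val_revb)
  finally show "circ m (dftc qs) $$ (x,y) = DF m qs $$ (x,y)" .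
qed (auto simp: DF_def)

lemma gok_dftc: "distinct qs \<Longrightarrow> \<forall>p\<in>set qs. p < m \<Longrightarrow> \<forall>g\<in>set (dftc qs). gok m g"
  using gok_qft[of "rev qs" m] gok_swn[of qs m] by (auto simp: dftc_def)

lemma length_dftc: "length (dftc qs) \<le> 3 * length qs ^ 2 + 3 * length qs"
  using length_qft[of "rev qs"] length_swn[of qs] by (simp add: dftc_def)


fun setreg :: "nat list \<Rightarrow> nat \<Rightarrow> nat \<Rightarrow> nat" where
  "setreg [] v y = y"
| "setreg (q # qs) v y = setreg qs (v div 2) (if odd v then set_bit q y else unset_bit q y)"

lemma setreg_out: "j \<notin> set qs \<Longrightarrow> bit (setreg qs v y) j = bit y j"
  by (induction qs arbitrary: v y) (auto simp: bsb bub)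

lemma setreg_lt: "\<forall>p\<in>set qs. p < m \<Longrightarrow> y < 2^m \<Longrightarrow> setreg qs v y < 2^m"
  unfolding lt_pow_iff using setreg_out by (metis not_le)

lemma agree_setreg: "agree (set qs) (setreg qs v y) y"
  by (simp add: agree_def setreg_out)

lemma val_setreg: "distinct qs \<Longrightarrow> val qs (setreg qs v y) = v mod 2 ^ length qs"
proof (induction qs arbitrary: v y)
  case Nil thus ?case by simp
next
  case (Cons q qs)
  let ?y' = "if odd v then set_bit q y else unset_bit q y"
  have qn: "q \<notin> set qs" "distinct qs" using Cons.prems by auto
  have b: "bv (setreg qs (v div 2) ?y') q = v mod 2"
    using qn by (auto simp: bv_def setreg_out bsb bub odd_iff_mod_2_eq_one)
  have "val (q # qs) (setreg (q # qs) v y) = v mod 2 + 2 * ((v div 2) mod 2 ^ length qs)"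
    using b Cons.IH[OF qn(2)] by simp
  also have "\<dots> = v mod (2 * 2 ^ length qs)" by (simp add: mod_mult2_eq)
  finally show ?case by simp
qed

lemma val_inj: "val qs x = val qs y \<Longrightarrow> p \<in> set qs \<Longrightarrow> bit x p = bit y p"
proof (induction qs)
  case Nil thus ?case by simp
next
  case (Cons q qs)
  have e: "bv x q + 2 * val qs x = bv y q + 2 * val qs y" using Cons.prems by simp
  have "bv x q = bv y q" using e by (auto simp: bv_def) presburger+
  hence "bv x q = bv y q" "val qs x = val qs y" using e by auto
  thus ?case using Cons by (auto simp: bv_def split: if_splits)
qed

lemma reg_det: "agree (set qs) x y \<Longrightarrow> val qs x = val qs y \<Longrightarrow> x = y"
  by (rule bit_eqI) (metis agree_def val_inj)

section \<open>Fourier adder\<close>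

definition shf :: "nat list \<Rightarrow> (nat \<Rightarrow> nat) \<Rightarrow> nat \<Rightarrow> nat" where
  "shf qs k y = setreg qs (val qs y + k y) y"

lemma dg_QF_shift:
  assumes d: "distinct qs" and b: "\<forall>p\<in>set qs. p < m"
    and kr: "\<And>x y. agree (set qs) x y \<Longrightarrow> k x = k y"
  shows "dg m (\<lambda>x. cis (2 * pi * real (k x) * real (val (rev qs) x) / 2 ^ length qs)) * QF m qs = QF m qs * pm m (shf qs k)"
proof (rule mat_ent_eq[of _ "2^m"])
  fix x y assume xy: "x < (2::nat)^m" "y < (2::nat)^m"
  have sl: "shf qs k y < 2^m" using b xy by (simp add: shf_def setreg_lt)
  have ag: "agree (set qs) x (shf qs k y) = agree (set qs) x y"
    using agree_setreg[of qs "val qs y + k y" y] by (metis agree_sym agree_trans shf_def)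
  let ?K = "2 ^ length qs :: nat" and ?R = "val (rev qs) x" and ?V = "val qs y"
  have vs: "val qs (shf qs k y) = (?V + k y) mod ?K" using d by (simp add: shf_def val_setreg)
  show "(dg m (\<lambda>x. cis (2 * pi * real (k x) * real (val (rev qs) x) / 2 ^ length qs)) * QF m qs) $$ (x, y) =
    (QF m qs * pm m (shf qs k)) $$ (x, y)"
  proof (cases "agree (set qs) x y")
    case False thus ?thesis using xy sl ag by (simp add: dg_mult_left pm_mult_right QF_ent)
  next
    case True
    have kk: "k x = k y" using kr[OF True] .
    have dm: "?V + k y = (?V + k y) mod ?K + ?K * ((?V + k y) div ?K)" by simp
    have t: "2 * pi * real (k y) * real ?R / ?K + 2 * pi * real ?R * real ?V / ?K =
       2 * pi * real ?R * real ((?V + k y) mod ?K) / ?K + 2 * pi * real (?R * ((?V + k y) div ?K))"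
    proof -
      have "real (?V + k y) = real ((?V + k y) mod ?K) + real ?K * real ((?V + k y) div ?K)"
        by (metis dm of_nat_add of_nat_mult)
      hence h: "real (k y) + real ?V = real ((?V + k y) mod ?K) + real ?K * real ((?V + k y) div ?K)" by simp
      have kp: "real ?K > 0" by simp
      have "2 * pi * real (k y) * real ?R / ?K + 2 * pi * real ?R * real ?V / ?K =
          2 * pi * real ?R * (real (k y) + real ?V) / ?K" by (simp add: field_simps)
      also have "\<dots> = 2 * pi * real ?R * (real ((?V + k y) mod ?K) + real ?K * real ((?V + k y) div ?K)) / ?K"
        by (simp only: h)
      also have "\<dots> = 2 * pi * real ?R * real ((?V + k y) mod ?K) / ?K + 2 * pi * real (?R * ((?V + k y) div ?K))"
        using kp by (simp add: field_simps)
      finally show ?thesis .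
    qed
    have c: "cis (2 * pi * real (k y) * real ?R / ?K) * cis (2 * pi * real ?R * real ?V / ?K) =
        cis (2 * pi * real ?R * real ((?V + k y) mod ?K) / ?K)"
      by (simp only: cis_mult t, rule cis_period) (metis Ints_of_nat)
    show ?thesis using xy sl ag True vs kk c
      by (simp add: dg_mult_left pm_mult_right QF_ent mult.assoc[symmetric] mult.commute[of "cis _" "complex_of_real _"])
  qed
qed auto

lemma adder:
  assumes d: "distinct qs" and b: "\<forall>p\<in>set qs. p < m"
    and kr: "\<And>x y. agree (set qs) x y \<Longrightarrow> k x = k y"
    and D: "circ m Ds = dg m (\<lambda>x. cis (2 * pi * real (k x) * real (val (rev qs) x) / 2 ^ length qs))"
  shows "circ m (invc (qft qs) @ Ds @ qft qs) = pm m (shf qs k)"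
proof -
  let ?C = "circ m (invc (qft qs))"
  have gq: "\<forall>g\<in>set (qft qs). gok m g" using gok_qft d b by blast
  have "circ m (invc (qft qs) @ Ds @ qft qs) = ?C * (circ m Ds * QF m qs)"
    using d b by (simp add: circ_append qft_QF)
  also have "\<dots> = ?C * (QF m qs * pm m (shf qs k))" by (simp add: D dg_QF_shift[OF d b kr])
  also have "\<dots> = (?C * QF m qs) * pm m (shf qs k)"
    by (rule assoc_mult_mat[symmetric, of _ "2^m" "2^m" _ "2^m" _ "2^m"]) auto
  also have "?C * QF m qs = 1\<^sub>m (2^m)" using circ_inv[OF gq] d b by (simp add: qft_QF)
  finally show ?thesis by (simp add: left_mult_one_mat[OF pm_carrier])
qed

definition addc :: "nat list \<Rightarrow> nat \<Rightarrow> gate list" where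
  "addc qs c = invc (qft qs) @ phl (2 * pi * real c / 2 ^ length qs) (rev qs) @ qft qs"

definition caddc :: "nat list \<Rightarrow> nat \<Rightarrow> gate list" where
  "caddc qs ctl = invc (qft qs) @ cphl (2 * pi / 2 ^ length qs) ctl (rev qs) @ qft qs"

lemma addc_pm: "distinct qs \<Longrightarrow> \<forall>p\<in>set qs. p < m \<Longrightarrow> circ m (addc qs c) = pm m (shf qs (\<lambda>_. c))"
  unfolding addc_def
proof (rule adder)
  assume b: "\<forall>p\<in>set qs. p < m"
  show "circ m (phl (2 * pi * real c / 2 ^ length qs) (rev qs)) =
    dg m (\<lambda>x. cis (2 * pi * real c * real (val (rev qs) x) / 2 ^ length qs))"
    using b by (simp add: phl_dg)
qed auto

lemma caddc_pm: "distinct qs \<Longrightarrow> \<forall>p\<in>set qs. p < m \<Longrightarrow> ctl < m \<Longrightarrow> ctl \<notin> set qs \<Longrightarrow>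
  circ m (caddc qs ctl) = pm m (shf qs (\<lambda>y. bv y ctl))"
  unfolding caddc_def
proof (rule adder)
  assume b: "\<forall>p\<in>set qs. p < m" "ctl < m" "ctl \<notin> set qs"
  show "circ m (cphl (2 * pi / 2 ^ length qs) ctl (rev qs)) =
    dg m (\<lambda>x. cis (2 * pi * real (bv x ctl) * real (val (rev qs) x) / 2 ^ length qs))"
  proof -
    have "\<forall>p\<in>set (rev qs). p < m \<and> p \<noteq> ctl" using b by auto
    hence "circ m (cphl (2 * pi / 2 ^ length qs) ctl (rev qs)) =
      dg m (\<lambda>x. cis (2 * pi / 2 ^ length qs * real (bv x ctl) * real (val (rev qs) x)))"
      using cphl_dg b(2) by blast
    also have "\<dots> = dg m (\<lambda>x. cis (2 * pi * real (bv x ctl) * real (val (rev qs) x) / 2 ^ length qs))"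
      by (rule dg_cong) simp
    finally show ?thesis .
  qed
  show "\<And>x y. agree (set qs) x y \<Longrightarrow> bv x ctl = bv y ctl" using b by (auto simp: agree_def bv_def)
qed auto

lemma gok_addc: "distinct qs \<Longrightarrow> \<forall>p\<in>set qs. p < m \<Longrightarrow> \<forall>g\<in>set (addc qs c). gok m g"
  unfolding addc_def using gok_qft invc_ok gok_phl[of "rev qs" m] by (metis Un_iff set_append set_rev)

lemma gok_caddc: "distinct qs \<Longrightarrow> \<forall>p\<in>set qs. p < m \<Longrightarrow> ctl < m \<Longrightarrow> ctl \<notin> set qs \<Longrightarrow> \<forall>g\<in>set (caddc qs ctl). gok m g"
proof -
  assume a: "distinct qs" "\<forall>p\<in>set qs. p < m" "ctl < m" "ctl \<notin> set qs"
  have "\<forall>p\<in>set (rev qs). p < m \<and> p \<noteq> ctl" using a by auto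
  hence "\<forall>g\<in>set (cphl (2 * pi / 2 ^ length qs) ctl (rev qs)). gok m g" using gok_cphl a(3) by blast
  moreover have "\<forall>g\<in>set (qft qs). gok m g" using gok_qft a by blast
  ultimately show ?thesis unfolding caddc_def using invc_ok by auto
qed

lemma length_addc: "length (addc qs c) \<le> 6 * length qs ^ 2 + length qs"
  using length_qft[of qs] by (simp add: addc_def)

lemma length_caddc: "length (caddc qs c) \<le> 6 * length qs ^ 2 + 5 * length qs"
  using length_qft[of qs] by (simp add: caddc_def)


section \<open>Controlled Hadamard\<close>

lemma trig8: "2 * sin (pi/8) * cos (pi/8) = 1 / sqrt 2" "cos (pi/8)^2 - sin (pi/8)^2 = 1 / sqrt 2"
proof -
  have e: "2 * (pi/8) = pi/4" by simp
  have s: "sqrt 2 / 2 = 1 / sqrt (2::real)" by (simp add: field_simps)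
  show "2 * sin (pi/8) * cos (pi/8) = 1 / sqrt 2" using sin_double[of "pi/8"] sin_45 e s by simp
  show "cos (pi/8)^2 - sin (pi/8)^2 = 1 / sqrt 2" using cos_double[of "pi/8"] cos_45 e s by simp
qed

lemma rotx: "i < 2 \<Longrightarrow> j < 2 \<Longrightarrow>
  rotmat (-(pi/8)) $$ (i,0) * rotmat (pi/8) $$ (1,j) + rotmat (-(pi/8)) $$ (i,1) * rotmat (pi/8) $$ (0,j) = hmat $$ (i,j)"
proof -
  assume ij: "i < 2" "j < 2"
  let ?c = "cos (pi/8)" and ?s = "sin (pi/8)"
  have r1: "complex_of_real ?c * complex_of_real ?s + complex_of_real ?s * complex_of_real ?c = 1 / complex_of_real (sqrt 2)"
  proof -
    have "?c * ?s + ?s * ?c = 1 / sqrt 2" using trig8(1) by (simp add: algebra_simps)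
    hence "complex_of_real (?c * ?s + ?s * ?c) = complex_of_real (1 / sqrt 2)" by simp
    thus ?thesis by (simp add: of_real_mult)
  qed
  have r2: "complex_of_real ?c * complex_of_real ?c - complex_of_real ?s * complex_of_real ?s = 1 / complex_of_real (sqrt 2)"
  proof -
    have "?c * ?c - ?s * ?s = 1 / sqrt 2" using trig8(2) by (simp add: power2_eq_square)
    hence "complex_of_real (?c * ?c - ?s * ?s) = complex_of_real (1 / sqrt 2)" by simp
    thus ?thesis by (simp add: of_real_mult)
  qed
  show ?thesis using ij r1 r2
    by (auto simp: less_2_cases_iff rotmat_def hmat_def algebra_simps)
qed

lemma rot_inv_ent: "i < 2 \<Longrightarrow> j < 2 \<Longrightarrow>
  rotmat (-(pi/8)) $$ (i,0) * rotmat (pi/8) $$ (0,j) + rotmat (-(pi/8)) $$ (i,1) * rotmat (pi/8) $$ (1,j) = (if i = j then 1 else 0)"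
proof -
  assume ij: "i < 2" "j < 2"
  have "(rotmat (-(pi/8)) * rotmat (pi/8)) $$ (i,j) = rotmat (-(pi/8)) $$ (i,0) * rotmat (pi/8) $$ (0,j) + rotmat (-(pi/8)) $$ (i,1) * rotmat (pi/8) $$ (1,j)"
    by (rule mult2) (use ij in auto)
  moreover have "rotmat (-(pi/8)) * rotmat (pi/8) = 1\<^sub>m 2" by (simp add: rotrot rot0)
  ultimately show ?thesis using ij by simp
qed

definition chv :: "nat \<Rightarrow> nat \<Rightarrow> nat \<Rightarrow> nat \<Rightarrow> complex" where
  "chv c t x y = (if agree {t} x y then (if bit y c then hmat $$ (bv x t, bv y t) else (if bv x t = bv y t then 1 else 0)) else 0)"

definition chc :: "nat \<Rightarrow> nat \<Rightarrow> gate list" where "chc c t = [Rot (-(pi/8)) t, CX c t, Rot (pi/8) t]"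

lemma cxf_unset: "c \<noteq> t \<Longrightarrow> cxf c t (unset_bit t x) = (if bit x c then set_bit t x else unset_bit t x)"
  by (rule bit_eqI) (auto simp: cxf_bit bsb bub)
lemma cxf_set: "c \<noteq> t \<Longrightarrow> cxf c t (set_bit t x) = (if bit x c then unset_bit t x else set_bit t x)"
  by (rule bit_eqI) (auto simp: cxf_bit bsb bub)
lemma agree1_set_iff: "agree {t} (set_bit t x) y = agree {t} x y"
  by (auto simp: agree_def bsb)
lemma agree1_unset_iff: "agree {t} (unset_bit t x) y = agree {t} x y"
  by (auto simp: agree_def bub)

lemma sqg_one_right[simp]: "single_qubit_gate m t U * 1\<^sub>m (2^m) = single_qubit_gate m t U"
  by (rule right_mult_one_mat[OF sqg_carrier])

lemma circ_chc: "c < m \<Longrightarrow> t < m \<Longrightarrow> c \<noteq> t \<Longrightarrow> circ m (chc c t) = mat (2^m) (2^m) (\<lambda>(x,y). chv c t x y)"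
proof (rule mat_ent_eq[of _ "2^m"])
  fix x y assume a: "c < m" "t < m" "c \<noteq> t" "x < (2::nat)^m" "y < (2::nat)^m"
  let ?A = "rotmat (-(pi/8))" and ?B = "rotmat (pi/8)"
  have l: "unset_bit t x < 2^m" "set_bit t x < 2^m" using a by (auto simp: unset_bit_lt set_bit_lt)
  have e: "circ m (chc c t) $$ (x,y) =
     ?A $$ (bv x t, 0) * single_qubit_gate m (Suc t) ?B $$ (cxf c t (unset_bit t x), y) +
     ?A $$ (bv x t, 1) * single_qubit_gate m (Suc t) ?B $$ (cxf c t (set_bit t x), y)"
    using a l by (simp add: chc_def circ_Cons sqg_mult_left cx_mult_left)
  have l2: "cxf c t (unset_bit t x) < 2^m" "cxf c t (set_bit t x) < 2^m" using a l by (auto simp: cxf_lt)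
  have bc: "agree {t} x y \<Longrightarrow> bit y c = bit x c" using a by (auto simp: agree_def)
  show "circ m (chc c t) $$ (x,y) = mat (2^m) (2^m) (\<lambda>(x,y). chv c t x y) $$ (x,y)"
  proof (cases "bit x c")
    case True
    thus ?thesis unfolding e using a l l2 bc rotx[of "bv x t" "bv y t"]
      by (auto simp: sqg_ent cxf_unset cxf_set agree1_set_iff agree1_unset_iff chv_def)
  next
    case False
    thus ?thesis unfolding e using a l l2 bc rot_inv_ent[of "bv x t" "bv y t"]
      by (auto simp: sqg_ent cxf_unset cxf_set agree1_set_iff agree1_unset_iff chv_def)
  qed
qed (auto simp: chc_def)

lemma gok_chc: "c < m \<Longrightarrow> t < m \<Longrightarrow> c \<noteq> t \<Longrightarrow> \<forall>g\<in>set (chc c t). gok m g"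
  by (auto simp: chc_def)

lemma shf_inv: "distinct qs \<Longrightarrow> c1 + c3 = 2 ^ length qs \<Longrightarrow> shf qs (\<lambda>_. c3) (shf qs (\<lambda>_. c1) z) = z"
proof (rule reg_det[of qs])
  assume d: "distinct qs" and c: "c1 + c3 = 2 ^ length qs"
  show "agree (set qs) (shf qs (\<lambda>_. c3) (shf qs (\<lambda>_. c1) z)) z"
    unfolding shf_def by (meson agree_setreg agree_trans)
  have "val qs (shf qs (\<lambda>_. c3) (shf qs (\<lambda>_. c1) z)) = ((val qs z + c1) mod 2 ^ length qs + c3) mod 2 ^ length qs"
    using d by (simp add: shf_def val_setreg)
  also have "\<dots> = (val qs z + c1 + c3) mod 2 ^ length qs" by (rule mod_add_left_eq)
  also have "\<dots> = (val qs z + 2 ^ length qs) mod 2 ^ length qs" by (simp only: add.assoc c)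
  also have "\<dots> = val qs z" using val_lt[of qs z] by simp
  finally show "val qs (shf qs (\<lambda>_. c3) (shf qs (\<lambda>_. c1) z)) = val qs z" .
qed

lemma shf_lt: "\<forall>p\<in>set qs. p < m \<Longrightarrow> y < 2^m \<Longrightarrow> shf qs k y < 2^m"
  by (simp add: shf_def setreg_lt)

lemma pm_mult_left: "B \<in> carrier_mat (2^m) (2^m) \<Longrightarrow> x < 2^m \<Longrightarrow> y < 2^m \<Longrightarrow> g x < 2^m \<Longrightarrow>
  f (g x) = x \<Longrightarrow> (\<And>z. z < 2^m \<Longrightarrow> f z = x \<Longrightarrow> z = g x) \<Longrightarrow>
  (pm m f * B) $$ (x,y) = B $$ (g x, y)"
proof -
  assume a: "B \<in> carrier_mat (2^m) (2^m)" "x < 2^m" "y < 2^m" "g x < 2^m" "f (g x) = x"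
    and u: "\<And>z. z < 2^m \<Longrightarrow> f z = x \<Longrightarrow> z = g x"
  have "(pm m f * B) $$ (x,y) = (\<Sum>k<2^m. pm m f $$ (x,k) * B $$ (k,y))"
    by (rule mult_ent) (use a in auto)
  also have "\<dots> = pm m f $$ (x, g x) * B $$ (g x,y)"
  proof (rule sum_single)
    fix z assume z: "z < 2^m" "z \<noteq> g x"
    hence "x \<noteq> f z" using u by metis
    thus "pm m f $$ (x, z) * B $$ (z, y) = 0" using z a by (simp add: pm_ent)
  qed (use a in auto)
  finally show ?thesis by (simp add: pm_ent a)
qed


lemma val_map_Suc: "val (map Suc ps) z = val ps (z div 2)"
  by (induction ps) (auto simp: bv_def bit_Suc)

lemma val_upt: "val [0..<k] z = z mod 2 ^ k"
proof (induction k arbitrary: z)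
  case 0 thus ?case by simp
next
  case (Suc k)
  have e: "[0..<Suc k] = 0 # map Suc [0..<k]" by (simp add: upt_conv_Cons map_Suc_upt)
  have b: "bv z 0 = z mod 2" by (simp add: bv_def bit_0 odd_iff_mod_2_eq_one)
  have "val [0..<Suc k] z = z mod 2 + 2 * ((z div 2) mod 2^k)" unfolding e using Suc b by (simp add: val_map_Suc)
  also have "\<dots> = z mod 2 ^ Suc k" by (simp add: mod_mult2_eq)
  finally show ?case .
qed

fun cxl :: "nat \<Rightarrow> nat list \<Rightarrow> nat \<Rightarrow> nat" where
  "cxl c [] y = y"
| "cxl c (p # ps) y = cxf c p (cxl c ps y)"

lemma bit_cxl: "distinct ps \<Longrightarrow> c \<notin> set ps \<Longrightarrow>
  bit (cxl c ps y) j = (if j \<in> set ps \<and> bit y c then \<not> bit y j else bit y j)"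
proof (induction ps arbitrary: j)
  case Nil thus ?case by simp
next
  case (Cons p ps)
  have cp: "c \<noteq> p" using Cons.prems by auto
  have IH: "\<And>j. bit (cxl c ps y) j = (if j \<in> set ps \<and> bit y c then \<not> bit y j else bit y j)"
    using Cons by auto
  have pn: "p \<notin> set ps" using Cons.prems by auto
  have h1: "bit (cxl c ps y) c = bit y c" using IH[of c] Cons.prems by auto
  have h2: "bit (cxl c ps y) p = bit y p" using IH[of p] pn by auto
  show ?case using pn Cons.prems by (cases "j = p") (simp_all add: cxf_bit[OF cp] h1 h2 IH)
qed

lemma cxl_lt: "\<forall>p\<in>set ps. p < m \<Longrightarrow> y < 2^m \<Longrightarrow> cxl c ps y < 2^m"
  by (induction ps) (auto simp: cxf_lt)

lemma gmat_cx_pm: "gmat m (CX c t) = pm m (cxf c t)"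
  by (rule mat_ent_eq[of _ "2^m"]) (auto simp: cx_ent pm_ent)

lemma circ_cxs: "\<forall>p\<in>set ps. p < m \<Longrightarrow> circ m (map (CX c) ps) = pm m (cxl c ps)"
proof (induction ps)
  case Nil thus ?case by (simp add: pm_def one_mat_def)
next
  case (Cons p ps)
  have "circ m (map (CX c) (p # ps)) = pm m (cxf c p) * pm m (cxl c ps)"
    using Cons by (simp add: circ_Cons gmat_cx_pm[symmetric])
  also have "\<dots> = pm m (\<lambda>y. cxf c p (cxl c ps y))" using Cons.prems by (simp add: pm_mult cxl_lt)
  also have "(\<lambda>y. cxf c p (cxl c ps y)) = cxl c (p # ps)" by (rule ext) simp
  finally show ?case .
qed

lemma val_compl: "(\<And>p. p \<in> set ps \<Longrightarrow> bit z p = (\<not> bit y p)) \<Longrightarrow> val ps z + val ps y = 2 ^ length ps - 1"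
proof (induction ps)
  case Nil thus ?case by simp
next
  case (Cons p ps)
  have IH: "val ps z + val ps y = 2 ^ length ps - 1" using Cons by auto
  have b: "bv z p + bv y p = 1" using Cons.prems[of p] by (auto simp: bv_def)
  have "val (p # ps) z + val (p # ps) y = (bv z p + bv y p) + 2 * (val ps z + val ps y)" by simp
  also have "\<dots> = 1 + 2 * (2 ^ length ps - 1)" using b IH by simp
  also have "\<dots> = 2 ^ length (p # ps) - 1"
  proof -
    have t: "(1::nat) \<le> 2 ^ length ps" by simp
    have "1 + 2 * (2 ^ length ps - 1) = 2 * 2 ^ length ps - (1::nat)" using t by linarith
    thus ?thesis by simp
  qed
  finally show ?case .
qed

section \<open>The construction\<close>

definition mq :: "nat \<Rightarrow> nat" where "mq n = Suc (Suc n)"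
lemma mq_props: "n < mq n" "Suc n < mq n" "p < n \<Longrightarrow> p < mq n" "p < Suc n \<Longrightarrow> p < mq n"
  by (auto simp: mq_def)

definition rA :: "nat \<Rightarrow> nat list" where "rA n = [0..<n] @ [Suc n]"
definition s1 :: "nat \<Rightarrow> nat \<Rightarrow> nat" where "s1 n = shf (rA n) (\<lambda>_. 2^n - 1)"
definition s3 :: "nat \<Rightarrow> nat \<Rightarrow> nat" where "s3 n = shf (rA n) (\<lambda>_. 2^n + 1)"
definition Hcirc :: "nat \<Rightarrow> gate list" where
  "Hcirc n = addc (rA n) (2^n + 1) @ chc (Suc n) n @ addc (rA n) (2^n - 1)"
definition pf :: "nat \<Rightarrow> nat \<Rightarrow> nat" where
  "pf n y = shf [0..<n] (\<lambda>y. bv y n) (cxl n [0..<n] y)"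
definition Pcirc :: "nat \<Rightarrow> gate list" where
  "Pcirc n = caddc [0..<n] n @ map (CX n) [0..<n]"
definition Fcirc :: "nat \<Rightarrow> gate list" where "Fcirc n = dftc [0..<Suc n]"
definition full :: "nat \<Rightarrow> gate list" where
  "full n = Hcirc n @ Pcirc n @ Fcirc n @ Pcirc n @ Hcirc n"

definition Hm :: "nat \<Rightarrow> complex mat" where
  "Hm n = mat (2 ^ mq n) (2 ^ mq n) (\<lambda>(x,y). chv (Suc n) n (s1 n x) (s1 n y))"

lemma rA_props: "distinct (rA n)" "\<forall>p\<in>set (rA n). p < mq n" "length (rA n) = Suc n"
  "n \<notin> set (rA n)"
  by (auto simp: rA_def mq_def)

lemma s_inv: "s3 n (s1 n z) = z" "s1 n (s3 n z) = z"
proof -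
  have "(2::nat)^n \<ge> 1" by simp
  hence c: "(2^n - 1) + (2^n + 1) = (2::nat) ^ length (rA n)" "(2^n + 1) + (2^n - 1) = (2::nat) ^ length (rA n)"
    by (simp_all add: rA_props)
  show "s3 n (s1 n z) = z" unfolding s1_def s3_def by (rule shf_inv[OF rA_props(1) c(1)])
  show "s1 n (s3 n z) = z" unfolding s1_def s3_def by (rule shf_inv[OF rA_props(1) c(2)])
qed

lemma s_lt: "y < 2 ^ mq n \<Longrightarrow> s1 n y < 2 ^ mq n" "y < 2 ^ mq n \<Longrightarrow> s3 n y < 2 ^ mq n"
  unfolding s1_def s3_def by (rule shf_lt[OF rA_props(2)], assumption)+

lemma circ_Hcirc: "circ (mq n) (Hcirc n) = Hm n"
proof -
  let ?m = "mq n"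
  let ?C = "mat (2^?m) (2^?m) (\<lambda>(x,y). chv (Suc n) n x y)"
  have "circ ?m (Hcirc n) = pm ?m (s3 n) * (?C * pm ?m (s1 n))"
    using rA_props mq_props by (simp add: Hcirc_def circ_append addc_pm circ_chc s1_def s3_def)
  also have "\<dots> = Hm n"
  proof (rule mat_ent_eq[of _ "2^?m"])
    fix x y assume a: "x < (2::nat)^?m" "y < (2::nat)^?m"
    have "(pm ?m (s3 n) * (?C * pm ?m (s1 n))) $$ (x,y) = (?C * pm ?m (s1 n)) $$ (s1 n x, y)"
    proof (rule pm_mult_left)
      show "\<And>z. z < 2 ^ ?m \<Longrightarrow> s3 n z = x \<Longrightarrow> z = s1 n x" using s_inv by metis
    qed (use a s_inv s_lt in auto)
    also have "\<dots> = chv (Suc n) n (s1 n x) (s1 n y)" using a s_lt by (simp add: pm_mult_right)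
    finally show "(pm ?m (s3 n) * (?C * pm ?m (s1 n))) $$ (x,y) = Hm n $$ (x,y)" using a by (simp add: Hm_def)
  next
    show "pm ?m (s3 n) * (?C * pm ?m (s1 n)) \<in> carrier_mat (2^?m) (2^?m)" by (intro mult_car pm_carrier mat_carrier)
  qed (simp add: Hm_def)
  finally show ?thesis .
qed

lemma circ_Pcirc: "circ (mq n) (Pcirc n) = pm (mq n) (pf n)"
proof -
  let ?m = "mq n"
  have "circ ?m (Pcirc n) = pm ?m (shf [0..<n] (\<lambda>y. bv y n)) * pm ?m (cxl n [0..<n])"
    using mq_props by (simp add: Pcirc_def circ_append caddc_pm circ_cxs)
  also have "\<dots> = pm ?m (\<lambda>y. shf [0..<n] (\<lambda>y. bv y n) (cxl n [0..<n] y))"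
    using mq_props by (simp add: pm_mult cxl_lt)
  also have "(\<lambda>y. shf [0..<n] (\<lambda>y. bv y n) (cxl n [0..<n] y)) = pf n" by (rule ext) (simp add: pf_def)
  finally show ?thesis .
qed

lemma pf_props: "agree (set [0..<n]) (pf n y) y"
  "val [0..<n] (pf n y) = (if bit y n then (2^n - val [0..<n] y) mod 2^n else val [0..<n] y)"
proof -
  let ?R = "[0..<n]" and ?c = "cxl n [0..<n] y"
  have bc: "\<And>j. bit ?c j = (if j \<in> set ?R \<and> bit y n then \<not> bit y j else bit y j)"
    by (rule bit_cxl) auto
  have ag1: "agree (set ?R) ?c y" using bc by (auto simp: agree_def)
  show "agree (set [0..<n]) (pf n y) y"
    unfolding pf_def shf_def using agree_setreg ag1 agree_trans by blast
  have vp: "val ?R (pf n y) = (val ?R ?c + bv ?c n) mod 2^n"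
    by (simp add: pf_def shf_def val_setreg)
  have bn: "bv ?c n = bv y n" using bc[of n] by (simp add: bv_def)
  show "val [0..<n] (pf n y) = (if bit y n then (2^n - val [0..<n] y) mod 2^n else val [0..<n] y)"
  proof (cases "bit y n")
    case True
    have "val ?R ?c + val ?R y = 2 ^ n - 1"
      using val_compl[of ?R ?c y] bc True by simp
    moreover have "val ?R y < 2^n" using val_lt[of ?R y] by simp
    ultimately have "val ?R ?c + bv ?c n = 2^n - val ?R y" using bn True by (simp add: bv_def)
    thus ?thesis using vp True by simp
  next
    case False
    have "?c = y" by (rule bit_eqI) (use bc False in auto)
    thus ?thesis using vp False bn val_lt[of ?R y] by (simp add: bv_def)
  qed
qed

lemma bit_pf_out: "j \<ge> n \<Longrightarrow> bit (pf n y) j = bit y j"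
  using pf_props(1)[of n y] by (auto simp: agree_def)

lemma pf_inv: "pf n (pf n y) = y"
proof (rule reg_det[of "[0..<n]"])
  show "agree (set [0..<n]) (pf n (pf n y)) y" using pf_props(1) agree_trans by blast
  have bn: "bit (pf n y) n = bit y n" by (rule bit_pf_out) simp
  have vl: "val [0..<n] y < 2^n" using val_lt[of "[0..<n]" y] by simp
  show "val [0..<n] (pf n (pf n y)) = val [0..<n] y"
  proof (cases "bit y n")
    case True
    show ?thesis
    proof (cases "val [0..<n] y = 0")
      case True
      thus ?thesis using pf_props(2)[of n y] pf_props(2)[of n "pf n y"] bn by simp
    next
      case False
      have "(2^n - val [0..<n] y) mod 2^n = 2^n - val [0..<n] y" using False vl by simp
      thus ?thesis using pf_props(2)[of n y] pf_props(2)[of n "pf n y"] bn True vl False by simp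
    qed
  next
    case False
    thus ?thesis using pf_props(2)[of n y] pf_props(2)[of n "pf n y"] bn by simp
  qed
qed

lemma pf_lt: "y < 2 ^ m \<Longrightarrow> n < m \<Longrightarrow> pf n y < 2 ^ m"
  unfolding pf_def by (rule shf_lt) (auto simp: cxl_lt)


section \<open>Analytic part\<close>

definition c0 :: "nat \<Rightarrow> nat \<Rightarrow> real" where
  "c0 N x = (if x mod N = 0 then (if x < N then 1 else 0) else 1 / sqrt 2)"
definition c1 :: "nat \<Rightarrow> nat \<Rightarrow> real" where
  "c1 N x = (if x mod N = 0 then (if x < N then 0 else 1) else (if x < N then 1 / sqrt 2 else - (1 / sqrt 2)))"
definition p0 :: "nat \<Rightarrow> nat \<Rightarrow> nat" where "p0 N x = x mod N"
definition p1 :: "nat \<Rightarrow> nat \<Rightarrow> nat" where "p1 N x = N + (N - x mod N) mod N"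

lemma cos_refl: "r \<le> 2 * N \<Longrightarrow> N > 0 \<Longrightarrow> cos (pi * real (2 * N - r) * real t / real N) = cos (pi * real r * real t / real N)"
proof -
  assume a: "r \<le> 2 * N" "N > 0"
  have "pi * real (2 * N - r) * real t / real N = 2 * real t * pi - pi * real r * real t / real N"
    using a by (simp add: of_nat_diff field_simps)
  thus ?thesis by (simp add: cos_diff)
qed

lemma sin_refl: "r \<le> 2 * N \<Longrightarrow> N > 0 \<Longrightarrow> sin (pi * real (2 * N - r) * real t / real N) = - sin (pi * real r * real t / real N)"
proof -
  assume a: "r \<le> 2 * N" "N > 0"
  have "pi * real (2 * N - r) * real t / real N = 2 * real t * pi - pi * real r * real t / real N"
    using a by (simp add: of_nat_diff field_simps)
  thus ?thesis by (simp add: sin_diff)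
qed

lemma cos_N: "N > 0 \<Longrightarrow> cos (pi * real N * real t / real N) = (-1) ^ t"
  by simp
lemma sin_N: "N > 0 \<Longrightarrow> sin (pi * real N * real t / real N) = 0"
  by simp

lemma L1: "N > 0 \<Longrightarrow> y < 2 * N \<Longrightarrow>
  c0 N y * cos (pi * real (p0 N y) * real t / real N) + c1 N y * cos (pi * real (p1 N y) * real t / real N)
  = (if y \<le> N then sqrt 2 * kfac N y * cos (pi * real y * real t / real N) else 0)"
proof -
  assume a: "N > 0" "y < 2 * N"
  have s2: "1 / sqrt 2 + 1 / sqrt 2 = sqrt (2::real)" by (simp add: field_simps)
  consider "y = 0" | "y = N" | "0 < y \<and> y < N" | "N < y \<and> y < 2 * N" using a by linarith
  thus ?thesis
  proof cases
    case 1 thus ?thesis using a by (simp add: c0_def c1_def p0_def p1_def kfac_def)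
  next
    case 2 thus ?thesis using a by (simp add: c0_def c1_def p0_def p1_def kfac_def)
  next
    case 3
    have p1: "N + (N - y) = 2 * N - y" using 3 by simp
    have "c0 N y * cos (pi * real (p0 N y) * real t / real N) + c1 N y * cos (pi * real (p1 N y) * real t / real N)
       = (1 / sqrt 2 + 1 / sqrt 2) * cos (pi * real y * real t / real N)"
      using 3 a cos_refl[of y N t] by (simp add: c0_def c1_def p0_def p1_def p1 algebra_simps)
    thus ?thesis using 3 s2 by (simp add: kfac_def)
  next
    case 4
    have m: "y mod N = y - N"
    proof -
      have "y - N < N" using 4 by linarith
      thus ?thesis using 4 by (simp add: le_mod_geq)
    qed
    have p1: "N + (N - (y - N)) = 2 * N - (y - N)" using 4 by simp
    have nz: "y - N \<noteq> 0" "y - N < N" using 4 by auto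
    show ?thesis using 4 a cos_refl[of "y - N" N t] m p1 nz
      by (simp add: c0_def c1_def p0_def p1_def algebra_simps)
  qed
qed

lemma L2: "N > 0 \<Longrightarrow> y < 2 * N \<Longrightarrow>
  c0 N y * sin (pi * real (p0 N y) * real t / real N) + c1 N y * sin (pi * real (p1 N y) * real t / real N)
  = (if y \<le> N then 0 else sqrt 2 * sin (pi * real (y - N) * real t / real N))"
proof -
  assume a: "N > 0" "y < 2 * N"
  have s2: "1 / sqrt 2 + 1 / sqrt 2 = sqrt (2::real)" by (simp add: field_simps)
  consider "y = 0" | "y = N" | "0 < y \<and> y < N" | "N < y \<and> y < 2 * N" using a by linarith
  thus ?thesis
  proof cases
    case 1 thus ?thesis using a by (simp add: c0_def c1_def p0_def p1_def)
  next
    case 2 thus ?thesis using a by (simp add: c0_def c1_def p0_def p1_def)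
  next
    case 3
    have p1: "N + (N - y) = 2 * N - y" using 3 by simp
    show ?thesis using 3 a sin_refl[of y N t] by (simp add: c0_def c1_def p0_def p1_def p1 algebra_simps)
  next
    case 4
    have m: "y mod N = y - N"
    proof -
      have "y - N < N" using 4 by linarith
      thus ?thesis using 4 by (simp add: le_mod_geq)
    qed
    have p1: "N + (N - (y - N)) = 2 * N - (y - N)" using 4 by simp
    have nz: "y - N \<noteq> 0" "y - N < N" using 4 by auto
    have "c0 N y * sin (pi * real (p0 N y) * real t / real N) + c1 N y * sin (pi * real (p1 N y) * real t / real N)
      = (1 / sqrt 2 + 1 / sqrt 2) * sin (pi * real (y - N) * real t / real N)"
      using 4 a sin_refl[of "y - N" N t] m p1 nz by (simp add: c0_def c1_def p0_def p1_def algebra_simps)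
    thus ?thesis using 4 s2 by simp
  qed
qed

lemma cis_split: "cis t = complex_of_real (cos t) + \<i> * complex_of_real (sin t)"
  by (simp add: complex_eq_iff)

definition Fv :: "nat \<Rightarrow> nat \<Rightarrow> nat \<Rightarrow> complex" where
  "Fv N z w = complex_of_real (1 / sqrt (2 * real N)) * cis (pi * real w * real z / real N)"

lemma inner: "N > 0 \<Longrightarrow> x < 2 * N \<Longrightarrow>
  complex_of_real (c0 N x) * Fv N z (p0 N x) + complex_of_real (c1 N x) * Fv N z (p1 N x) =
  complex_of_real (1 / sqrt (2 * real N)) *
   (complex_of_real (if x \<le> N then sqrt 2 * kfac N x * cos (pi * real x * real z / real N) else 0) +
    \<i> * complex_of_real (if x \<le> N then 0 else sqrt 2 * sin (pi * real (x - N) * real z / real N)))"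
proof -
  assume a: "N > 0" "x < 2 * N"
  let ?k = "complex_of_real (1 / sqrt (2 * real N))"
  let ?a0 = "pi * real (p0 N x) * real z / real N" and ?a1 = "pi * real (p1 N x) * real z / real N"
  have e1: "complex_of_real (c0 N x * cos ?a0 + c1 N x * cos ?a1) =
      complex_of_real (if x \<le> N then sqrt 2 * kfac N x * cos (pi * real x * real z / real N) else 0)"
    using L1[OF a, of z] by simp
  have e2: "complex_of_real (c0 N x * sin ?a0 + c1 N x * sin ?a1) =
      complex_of_real (if x \<le> N then 0 else sqrt 2 * sin (pi * real (x - N) * real z / real N))"
    using L2[OF a, of z] by simp
  have "complex_of_real (c0 N x) * Fv N z (p0 N x) + complex_of_real (c1 N x) * Fv N z (p1 N x) =
     ?k * (complex_of_real (c0 N x * cos ?a0 + c1 N x * cos ?a1) + \<i> * complex_of_real (c0 N x * sin ?a0 + c1 N x * sin ?a1))"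
    by (simp add: Fv_def cis_split algebra_simps)
  thus ?thesis using e1 e2 by simp
qed

definition Wv :: "nat \<Rightarrow> nat \<Rightarrow> nat \<Rightarrow> complex" where
  "Wv N y x = (if y \<le> N \<and> x \<le> N then complex_of_real (sqrt (2 / real N) * kfac N y * kfac N x * cos (real y * real x * pi / real N))
     else if N < y \<and> N < x then \<i> * complex_of_real (sqrt (2 / real N) * sin (real (y - N) * real (x - N) * pi / real N))
     else 0)"

lemma sq2: "N > 0 \<Longrightarrow> 1 / sqrt (2 * real N) * (sqrt 2 * sqrt 2) = sqrt (2 / real N)"
proof -
  assume "N > 0"
  hence p: "sqrt (real N) > 0" by simp
  have "sqrt (2 / real N) = sqrt 2 / sqrt (real N)" by (simp add: real_sqrt_divide)
  moreover have "1 / sqrt (2 * real N) * (sqrt 2 * sqrt 2) = sqrt 2 / sqrt (real N)"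
    using p by (simp add: real_sqrt_mult field_simps)
  ultimately show ?thesis by simp
qed

lemma ana: "N > 0 \<Longrightarrow> x < 2 * N \<Longrightarrow> y < 2 * N \<Longrightarrow>
  complex_of_real (c0 N y) * (complex_of_real (c0 N x) * Fv N (p0 N y) (p0 N x) + complex_of_real (c1 N x) * Fv N (p0 N y) (p1 N x)) +
  complex_of_real (c1 N y) * (complex_of_real (c0 N x) * Fv N (p1 N y) (p0 N x) + complex_of_real (c1 N x) * Fv N (p1 N y) (p1 N x))
  = Wv N y x"
proof -
  assume a: "N > 0" "x < 2 * N" "y < 2 * N"
  let ?k = "1 / sqrt (2 * real N)"
  show ?thesis
  proof (cases "x \<le> N")
    case True
    have "complex_of_real (c0 N y) * (complex_of_real (c0 N x) * Fv N (p0 N y) (p0 N x) + complex_of_real (c1 N x) * Fv N (p0 N y) (p1 N x)) +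
      complex_of_real (c1 N y) * (complex_of_real (c0 N x) * Fv N (p1 N y) (p0 N x) + complex_of_real (c1 N x) * Fv N (p1 N y) (p1 N x))
      = complex_of_real (?k * sqrt 2 * kfac N x * (c0 N y * cos (pi * real (p0 N y) * real x / real N) + c1 N y * cos (pi * real (p1 N y) * real x / real N)))"
      using True a by (simp add: inner algebra_simps)
    also have "\<dots> = complex_of_real (?k * sqrt 2 * kfac N x * (if y \<le> N then sqrt 2 * kfac N y * cos (pi * real y * real x / real N) else 0))"
      using L1[of N y x] a by simp
    also have "\<dots> = Wv N y x"
    proof (cases "y \<le> N")
      case True
      have ca: "pi * real y * real x / real N = real y * real x * pi / real N" by (simp add: algebra_simps)
      have r: "?k * sqrt 2 * kfac N x * (sqrt 2 * kfac N y * cos (pi * real y * real x / real N)) =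
          sqrt (2 / real N) * kfac N y * kfac N x * cos (real y * real x * pi / real N)"
      proof -
        have "?k * sqrt 2 * kfac N x * (sqrt 2 * kfac N y * cos (pi * real y * real x / real N)) =
          (?k * (sqrt 2 * sqrt 2)) * kfac N y * kfac N x * cos (real y * real x * pi / real N)"
          by (simp only: ca ac_simps)
        thus ?thesis by (simp only: sq2[OF a(1)])
      qed
      have w: "Wv N y x = complex_of_real (sqrt (2 / real N) * kfac N y * kfac N x * cos (real y * real x * pi / real N))"
        using True \<open>x \<le> N\<close> by (simp add: Wv_def)
      show ?thesis unfolding w by (simp only: if_P[OF True] r)
    next
      case False thus ?thesis using \<open>x \<le> N\<close> by (simp add: Wv_def)
    qed
    finally show ?thesis .
  next
    case False
    have "complex_of_real (c0 N y) * (complex_of_real (c0 N x) * Fv N (p0 N y) (p0 N x) + complex_of_real (c1 N x) * Fv N (p0 N y) (p1 N x)) +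
      complex_of_real (c1 N y) * (complex_of_real (c0 N x) * Fv N (p1 N y) (p0 N x) + complex_of_real (c1 N x) * Fv N (p1 N y) (p1 N x))
      = \<i> * complex_of_real (?k * sqrt 2 * (c0 N y * sin (pi * real (p0 N y) * real (x - N) / real N) + c1 N y * sin (pi * real (p1 N y) * real (x - N) / real N)))"
      using False a by (simp add: inner algebra_simps)
    also have "\<dots> = \<i> * complex_of_real (?k * sqrt 2 * (if y \<le> N then 0 else sqrt 2 * sin (pi * real (y - N) * real (x - N) / real N)))"
      using L2[of N y "x - N"] a by simp
    also have "\<dots> = Wv N y x"
    proof (cases "y \<le> N")
      case False
      have ca: "pi * real (y - N) * real (x - N) / real N = real (y - N) * real (x - N) * pi / real N" by (simp add: algebra_simps)
      have r: "?k * sqrt 2 * (sqrt 2 * sin (pi * real (y - N) * real (x - N) / real N)) =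
          sqrt (2 / real N) * sin (real (y - N) * real (x - N) * pi / real N)"
      proof -
        have "?k * sqrt 2 * (sqrt 2 * sin (pi * real (y - N) * real (x - N) / real N)) =
          (?k * (sqrt 2 * sqrt 2)) * sin (real (y - N) * real (x - N) * pi / real N)"
          by (simp only: ca ac_simps)
        thus ?thesis by (simp only: sq2[OF a(1)])
      qed
      have w: "Wv N y x = \<i> * complex_of_real (sqrt (2 / real N) * sin (real (y - N) * real (x - N) * pi / real N))"
        using False \<open>\<not> x \<le> N\<close> by (simp add: Wv_def)
      show ?thesis unfolding w by (simp only: if_not_P[OF False] r)
    next
      case True thus ?thesis using \<open>\<not> x \<le> N\<close> by (simp add: Wv_def)
    qed
    finally show ?thesis .
  qed
qed


lemma hmat_sym: "i < 2 \<Longrightarrow> j < 2 \<Longrightarrow> hmat $$ (i,j) = hmat $$ (j,i)"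
  by (auto simp: hmat_def)

lemma chv_sym: "c \<noteq> t \<Longrightarrow> chv c t u v = chv c t v u"
proof -
  assume ct: "c \<noteq> t"
  show ?thesis
  proof (cases "agree {t} u v")
    case True
    hence "bit u c = bit v c" using ct by (auto simp: agree_def)
    thus ?thesis using True hmat_sym[of "bv u t" "bv v t"] by (auto simp: chv_def agree_sym)
  next
    case False thus ?thesis by (simp add: chv_def agree_sym)
  qed
qed

lemma Hm_sym: "x < 2 ^ mq n \<Longrightarrow> y < 2 ^ mq n \<Longrightarrow> Hm n $$ (x,y) = Hm n $$ (y,x)"
  by (simp add: Hm_def chv_sym)

lemma Hm_carrier[simp]: "Hm n \<in> carrier_mat (2 ^ mq n) (2 ^ mq n)" by (simp add: Hm_def)

lemma shf_agree: "distinct qs \<Longrightarrow> t \<notin> set qs \<Longrightarrow> agree {t} u v \<Longrightarrow>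
   agree {t} (shf qs (\<lambda>_. c) u) (shf qs (\<lambda>_. c) v)"
proof -
  assume d: "distinct qs" and t: "t \<notin> set qs" and a: "agree {t} u v"
  have vv: "val qs u = val qs v" using agree_val[OF a] t by auto
  have vs: "val qs (shf qs (\<lambda>_. c) u) = val qs (shf qs (\<lambda>_. c) v)" using d vv by (simp add: shf_def val_setreg)
  show ?thesis unfolding agree_def
  proof (intro allI impI)
    fix j assume j: "j \<notin> {t}"
    show "bit (shf qs (\<lambda>_. c) u) j = bit (shf qs (\<lambda>_. c) v) j"
    proof (cases "j \<in> set qs")
      case True thus ?thesis using val_inj[OF vs] by blast
    next
      case False thus ?thesis using a j by (simp add: shf_def setreg_out agree_def)
    qed
  qed
qed

lemma s1_agree: "agree {n} (s1 n u) (s1 n v) = agree {n} u v"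
proof
  assume "agree {n} u v" thus "agree {n} (s1 n u) (s1 n v)" unfolding s1_def by (rule shf_agree[OF rA_props(1) rA_props(4)])
next
  assume "agree {n} (s1 n u) (s1 n v)"
  hence "agree {n} (s3 n (s1 n u)) (s3 n (s1 n v))" unfolding s3_def by (rule shf_agree[OF rA_props(1) rA_props(4)])
  thus "agree {n} u v" by (simp add: s_inv)
qed

lemma sum_delta2: "(a::nat) < d \<Longrightarrow> b < d \<Longrightarrow>
  (\<Sum>z<d. ((if z = a then \<alpha> else 0) + (if z = b then \<beta> else 0)) * (g z :: complex)) = \<alpha> * g a + \<beta> * g b"
proof -
  assume ab: "a < d" "b < d"
  have "(\<Sum>z<d. ((if z = a then \<alpha> else 0) + (if z = b then \<beta> else 0)) * g z) =
     (\<Sum>z<d. (if z = a then \<alpha> * g a else 0)) + (\<Sum>z<d. (if z = b then \<beta> * g b else 0))"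
  proof -
    have "\<And>z. ((if z = a then \<alpha> else 0) + (if z = b then \<beta> else 0)) * g z = (if z = a then \<alpha> * g a else 0) + (if z = b then \<beta> * g b else 0)"
      by (auto simp: distrib_right)
    thus ?thesis by (simp add: sum.distrib)
  qed
  also have "\<dots> = \<alpha> * g a + \<beta> * g b" using ab by simp
  finally show ?thesis .
qed

lemma sum_delta2': "(a::nat) < d \<Longrightarrow> b < d \<Longrightarrow>
  (\<Sum>z<d. (g z :: complex) * ((if z = a then \<alpha> else 0) + (if z = b then \<beta> else 0))) = g a * \<alpha> + g b * \<beta>"
  using sum_delta2[of a d b \<alpha> \<beta> g] by (simp add: mult.commute)

lemma V_col: "x < 2 ^ mq n \<Longrightarrow> z < 2 ^ mq n \<Longrightarrow>
  (pm (mq n) (pf n) * Hm n) $$ (z,x) =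
    (if z = pf n (unset_bit n x) then Hm n $$ (unset_bit n x, x) else 0) +
    (if z = pf n (set_bit n x) then Hm n $$ (set_bit n x, x) else 0)"
proof -
  assume a: "x < 2 ^ mq n" "z < 2 ^ mq n"
  let ?D = "2 ^ mq n :: nat"
  have l: "unset_bit n x < ?D" "set_bit n x < ?D" using a mq_props by (auto simp: unset_bit_lt set_bit_lt)
  have "(pm (mq n) (pf n) * Hm n) $$ (z,x) = (\<Sum>u<?D. pm (mq n) (pf n) $$ (z,u) * Hm n $$ (u,x))"
    by (rule mult_ent) (use a in auto)
  also have "\<dots> = pm (mq n) (pf n) $$ (z, unset_bit n x) * Hm n $$ (unset_bit n x, x) +
      pm (mq n) (pf n) $$ (z, set_bit n x) * Hm n $$ (set_bit n x, x)"
  proof (rule sum_two)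
    fix u assume u: "u < ?D" "u \<noteq> unset_bit n x" "u \<noteq> set_bit n x"
    hence "\<not> agree {n} u x" using agree1_cases by blast
    hence "\<not> agree {n} (s1 n u) (s1 n x)" by (simp add: s1_agree)
    thus "pm (mq n) (pf n) $$ (z, u) * Hm n $$ (u, x) = 0" using u a by (simp add: Hm_def chv_def)
  qed (use l unset_ne_set in auto)
  finally show ?thesis using a l by (simp add: pm_ent)
qed

lemma U_row: "y < 2 ^ mq n \<Longrightarrow> z < 2 ^ mq n \<Longrightarrow>
  (Hm n * pm (mq n) (pf n)) $$ (y,z) = (pm (mq n) (pf n) * Hm n) $$ (z,y)"
proof -
  assume a: "y < 2 ^ mq n" "z < 2 ^ mq n"
  have pl: "pf n z < 2 ^ mq n" using a mq_props by (simp add: pf_lt)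
  have "(Hm n * pm (mq n) (pf n)) $$ (y,z) = Hm n $$ (y, pf n z)" using a pl by (simp add: pm_mult_right)
  also have "\<dots> = Hm n $$ (pf n z, y)" using a pl by (simp add: Hm_sym)
  also have "\<dots> = (pm (mq n) (pf n) * Hm n) $$ (z,y)"
    by (rule pm_mult_left[symmetric]) (use a pl pf_inv in auto)
  finally show ?thesis .
qed


abbreviation "PP n \<equiv> pm (mq n) (pf n)"
abbreviation "FF n \<equiv> DF (mq n) [0..<Suc n]"

lemma DF_carrier[simp]: "DF m qs \<in> carrier_mat (2^m) (2^m)" by (simp add: DF_def)

lemma circ_full: "circ (mq n) (full n) = Hm n * (PP n * (FF n * (PP n * Hm n)))"
proof -
  have "circ (mq n) (Fcirc n) = FF n"
    unfolding Fcirc_def by (rule dftc_DF) (auto simp: mq_def)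
  thus ?thesis by (simp add: full_def circ_append circ_Hcirc circ_Pcirc)
qed

lemma M_formula:
  assumes a: "x < 2 ^ mq n" "y < 2 ^ mq n"
  shows "circ (mq n) (full n) $$ (y,x) =
    Hm n $$ (unset_bit n y, y) * (FF n $$ (pf n (unset_bit n y), pf n (unset_bit n x)) * Hm n $$ (unset_bit n x, x) +
                                  FF n $$ (pf n (unset_bit n y), pf n (set_bit n x)) * Hm n $$ (set_bit n x, x)) +
    Hm n $$ (set_bit n y, y) * (FF n $$ (pf n (set_bit n y), pf n (unset_bit n x)) * Hm n $$ (unset_bit n x, x) +
                                FF n $$ (pf n (set_bit n y), pf n (set_bit n x)) * Hm n $$ (set_bit n x, x))"
proof -
  let ?D = "2 ^ mq n :: nat"
  let ?V = "PP n * Hm n"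
  have car: "?V \<in> carrier_mat ?D ?D" "FF n * ?V \<in> carrier_mat ?D ?D" by simp_all
  have lx: "unset_bit n x < ?D" "set_bit n x < ?D" "pf n (unset_bit n x) < ?D" "pf n (set_bit n x) < ?D"
    using a mq_props by (auto simp: unset_bit_lt set_bit_lt pf_lt)
  have ly: "unset_bit n y < ?D" "set_bit n y < ?D" "pf n (unset_bit n y) < ?D" "pf n (set_bit n y) < ?D"
    using a mq_props by (auto simp: unset_bit_lt set_bit_lt pf_lt)
  have FV: "(FF n * ?V) $$ (z,x) = FF n $$ (z, pf n (unset_bit n x)) * Hm n $$ (unset_bit n x, x) +
      FF n $$ (z, pf n (set_bit n x)) * Hm n $$ (set_bit n x, x)" if z: "z < ?D" for z
  proof -
    have "(FF n * ?V) $$ (z,x) = (\<Sum>w<?D. FF n $$ (z,w) * ?V $$ (w,x))"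
      by (rule mult_ent) (use a z in auto)
    also have "\<dots> = (\<Sum>w<?D. FF n $$ (z,w) * ((if w = pf n (unset_bit n x) then Hm n $$ (unset_bit n x, x) else 0) +
        (if w = pf n (set_bit n x) then Hm n $$ (set_bit n x, x) else 0)))"
      by (rule sum.cong) (use a in \<open>auto simp: V_col\<close>)
    also have "\<dots> = FF n $$ (z, pf n (unset_bit n x)) * Hm n $$ (unset_bit n x, x) +
      FF n $$ (z, pf n (set_bit n x)) * Hm n $$ (set_bit n x, x)" by (rule sum_delta2'[OF lx(3) lx(4)])
    finally show ?thesis .
  qed
  have "circ (mq n) (full n) = (Hm n * PP n) * (FF n * ?V)"
    unfolding circ_full by (rule assoc_mult_mat[symmetric, of _ ?D ?D _ ?D _ ?D]) auto
  hence "circ (mq n) (full n) $$ (y,x) = (\<Sum>z<?D. (Hm n * PP n) $$ (y,z) * (FF n * ?V) $$ (z,x))"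
    using a by (simp add: mult_ent)
  also have "\<dots> = (\<Sum>z<?D. ((if z = pf n (unset_bit n y) then Hm n $$ (unset_bit n y, y) else 0) +
        (if z = pf n (set_bit n y) then Hm n $$ (set_bit n y, y) else 0)) * (FF n * ?V) $$ (z,x))"
    by (rule sum.cong) (use a in \<open>auto simp: U_row V_col\<close>)
  also have "\<dots> = Hm n $$ (unset_bit n y, y) * (FF n * ?V) $$ (pf n (unset_bit n y), x) +
      Hm n $$ (set_bit n y, y) * (FF n * ?V) $$ (pf n (set_bit n y), x)"
    by (rule sum_delta2[OF ly(3) ly(4)])
  finally show ?thesis by (simp only: FV[OF ly(3)] FV[OF ly(4)])
qed


lemma mod_bits: "bit ((x::nat) mod 2^n) j = (j < n \<and> bit x j)"
  by (simp add: take_bit_eq_mod[symmetric] bit_take_bit_iff)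

lemma decomp: "(z::nat) < 2 ^ Suc n \<Longrightarrow> z = z mod 2^n + 2^n * bv z n"
proof -
  assume z: "z < 2 ^ Suc n"
  have "val [0..<Suc n] z = z" using z by (simp only: val_upt) simp
  moreover have "val [0..<Suc n] z = z mod 2^n + 2^n * bv z n"
    by (simp only: upt_Suc_append[OF le0] val_append1 val_upt length_upt) simp
  ultimately show ?thesis by simp
qed

lemma high_false: "(x::nat) < 2 ^ Suc n \<Longrightarrow> \<not> bit x (Suc n)"
  using lt_pow_imp by blast

lemma x_lt_N: "(x::nat) < 2 ^ Suc n \<Longrightarrow> (x < 2^n) = (\<not> bit x n)"
proof -
  assume x: "x < 2 ^ Suc n"
  have m: "x mod 2^n < 2^n" by simp
  show ?thesis
  proof
    assume "x < 2^n" thus "\<not> bit x n" using lt_pow_imp by blast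
  next
    assume "\<not> bit x n" hence "bv x n = 0" by (simp add: bv_def)
    thus "x < 2^n" using decomp[OF x] m by simp
  qed
qed

lemma unset_eq: "(x::nat) < 2 ^ Suc n \<Longrightarrow> unset_bit n x = x mod 2^n"
proof (rule bit_eqI)
  fix j assume x: "x < 2 ^ Suc n"
  show "bit (unset_bit n x) j = bit (x mod 2 ^ n) j"
  proof (cases "j \<le> n")
    case True thus ?thesis by (auto simp: bub mod_bits)
  next
    case False thus ?thesis using lt_pow_imp[OF x, of j] by (auto simp: bub mod_bits)
  qed
qed

lemma set_eq: "(x::nat) < 2 ^ Suc n \<Longrightarrow> set_bit n x = 2^n + x mod 2^n"
proof -
  assume x: "x < 2 ^ Suc n"
  have "set_bit n x = set_bit n (x mod 2^n)"
  proof (rule bit_eqI)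
    fix j show "bit (set_bit n x) j = bit (set_bit n (x mod 2 ^ n)) j"
    proof (cases "j \<le> n")
      case True thus ?thesis by (auto simp: bsb mod_bits)
    next
      case False thus ?thesis using lt_pow_imp[OF x, of j] by (auto simp: bsb mod_bits)
    qed
  qed
  also have "\<dots> = x mod 2^n + 2^n" by (simp add: set_bit_eq mod_bits)
  finally show ?thesis by simp
qed

lemma pf_low: "r < 2^n \<Longrightarrow> pf n r = r"
proof (rule reg_det[of "[0..<n]"])
  assume r: "r < 2^n"
  have "\<not> bit r n" using lt_pow_imp[OF r] by simp
  thus "val [0..<n] (pf n r) = val [0..<n] r" using pf_props(2)[of n r] by simp
qed (rule pf_props(1))

lemma pf_high: "r < 2^n \<Longrightarrow> pf n (2^n + r) = 2^n + (2^n - r) mod 2^n"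
proof -
  assume r: "r < 2^n"
  let ?y = "2^n + r" and ?z = "pf n (2^n + r)"
  have yl: "?y < 2 ^ Suc n" using r by simp
  have yn: "bit ?y n"
  proof -
    have "\<not> bit r n" using lt_pow_imp[OF r] by simp
    hence "set_bit n r = ?y" by (simp add: set_bit_eq)
    thus ?thesis by (metis bsb)
  qed
  have zb: "bit ?z j = bit ?y j" if "j \<ge> n" for j using that by (rule bit_pf_out)
  have zl: "?z < 2 ^ Suc n"
    unfolding lt_pow_iff using zb lt_pow_imp[OF yl] by (metis Suc_leD)
  have "?z = ?z mod 2^n + 2^n * bv ?z n" by (rule decomp[OF zl])
  moreover have "bv ?z n = 1" using zb[of n] yn by (simp add: bv_def)
  moreover have "?z mod 2^n = (2^n - r) mod 2^n"
  proof -
    have "?z mod 2^n = val [0..<n] ?z" by (simp add: val_upt)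
    also have "\<dots> = (2^n - val [0..<n] ?y) mod 2^n" using pf_props(2)[of n ?y] yn by simp
    also have "val [0..<n] ?y = r" using r by (simp add: val_upt)
    finally show ?thesis .
  qed
  ultimately show ?thesis by simp
qed

lemma val_rA: "val (rA n) z = z mod 2^n + 2^n * bv z (Suc n)"
  by (simp add: rA_def val_append1 val_upt)

lemma s1_bitn: "bit (s1 n z) n = bit z n"
  by (simp add: s1_def shf_def setreg_out rA_props(4))

lemma s1_flag: "(x::nat) < 2 ^ Suc n \<Longrightarrow> bit (s1 n x) (Suc n) = (x mod 2^n \<noteq> 0)"
proof -
  assume x: "x < 2 ^ Suc n"
  let ?N = "2^n :: nat" and ?r = "x mod 2^n" and ?z = "s1 n x"
  have N1: "?N \<ge> 1" by simp
  have r: "?r < ?N" by simp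
  have bx: "bv x (Suc n) = 0" using high_false[OF x] by (simp add: bv_def)
  have "val (rA n) ?z = (val (rA n) x + (?N - 1)) mod 2 ^ Suc n"
    by (simp add: s1_def shf_def val_setreg rA_props)
  also have "\<dots> = ?r + (?N - 1)"
  proof -
    have v: "val (rA n) x = ?r" using bx by (simp add: val_rA)
    have "?r + (?N - 1) < ?N + ?N" using r N1 by linarith
    hence "?r + (?N - 1) < 2 ^ Suc n" by simp
    thus ?thesis unfolding v by (rule mod_less)
  qed
  finally have e: "?z mod ?N + ?N * bv ?z (Suc n) = ?r + (?N - 1)" by (simp add: val_rA)
  have zm: "?z mod ?N < ?N" by simp
  show ?thesis
  proof (cases "?r = 0")
    case True
    have "bv ?z (Suc n) \<noteq> 1"
    proof
      assume "bv ?z (Suc n) = 1"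
      hence "?z mod ?N + ?N = ?N - 1" using e True by simp
      thus False using N1 by linarith
    qed
    hence "bv ?z (Suc n) = 0" by (simp add: bv_def split: if_splits)
    thus ?thesis using True by (simp add: bv_def split: if_splits)
  next
    case False
    have "bv ?z (Suc n) \<noteq> 0"
    proof
      assume "bv ?z (Suc n) = 0"
      hence "?z mod ?N = ?r + (?N - 1)" using e by simp
      thus False using zm False N1 by linarith
    qed
    hence "bv ?z (Suc n) = 1" by (simp add: bv_def split: if_splits)
    thus ?thesis using False by (simp add: bv_def split: if_splits)
  qed
qed

lemma hmat_vals: "j < 2 \<Longrightarrow> hmat $$ (0, j) = complex_of_real (1 / sqrt 2)"
  "hmat $$ (1, 0) = complex_of_real (1 / sqrt 2)"
  "hmat $$ (1, 1) = complex_of_real (- (1 / sqrt 2))"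
  by (auto simp: hmat_def)

lemma Hm_x0: "(x::nat) < 2 ^ Suc n \<Longrightarrow> Hm n $$ (unset_bit n x, x) = complex_of_real (c0 (2^n) x)"
proof -
  assume x: "x < 2 ^ Suc n"
  have x2: "x < 2 ^ mq n" using x by (simp add: mq_def)
  have xm: "x < 2 ^ mq n" "unset_bit n x < 2 ^ mq n" using x2 unset_bit_lt[OF x2] by auto
  have ag: "agree {n} (s1 n (unset_bit n x)) (s1 n x)" by (simp add: s1_agree)
  have b0: "bv (s1 n (unset_bit n x)) n = 0" by (simp add: bv_def s1_bitn bub)
  have e: "Hm n $$ (unset_bit n x, x) = chv (Suc n) n (s1 n (unset_bit n x)) (s1 n x)" using xm by (simp add: Hm_def)
  show ?thesis
  proof (cases "x mod 2^n = 0")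
    case True
    thus ?thesis unfolding e using ag b0 s1_flag[OF x] x_lt_N[OF x]
      by (auto simp: chv_def c0_def bv_def s1_bitn)
  next
    case False
    thus ?thesis unfolding e using ag b0 s1_flag[OF x] hmat_vals(1)[of "bv (s1 n x) n"]
      by (auto simp: chv_def c0_def)
  qed
qed

lemma Hm_x1: "(x::nat) < 2 ^ Suc n \<Longrightarrow> Hm n $$ (set_bit n x, x) = complex_of_real (c1 (2^n) x)"
proof -
  assume x: "x < 2 ^ Suc n"
  have x2: "x < 2 ^ mq n" using x by (simp add: mq_def)
  have xm: "x < 2 ^ mq n" "set_bit n x < 2 ^ mq n" using x2 set_bit_lt[OF mq_props(1) x2] by auto
  have ag: "agree {n} (s1 n (set_bit n x)) (s1 n x)" by (simp add: s1_agree)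
  have b1: "bv (s1 n (set_bit n x)) n = 1" by (simp add: bv_def s1_bitn bsb)
  have e: "Hm n $$ (set_bit n x, x) = chv (Suc n) n (s1 n (set_bit n x)) (s1 n x)" using xm by (simp add: Hm_def)
  show ?thesis
  proof (cases "x mod 2^n = 0")
    case True
    thus ?thesis unfolding e using ag b1 s1_flag[OF x] x_lt_N[OF x]
      by (auto simp: chv_def c1_def bv_def s1_bitn)
  next
    case False
    thus ?thesis unfolding e using ag b1 s1_flag[OF x] x_lt_N[OF x] hmat_vals(2,3)
      by (auto simp: chv_def c1_def bv_def s1_bitn)
  qed
qed

lemma FF_val: "a < 2 ^ Suc n \<Longrightarrow> b < 2 ^ Suc n \<Longrightarrow> FF n $$ (a, b) = Fv (2^n) a b"
proof -
  assume ab: "a < 2 ^ Suc n" "b < 2 ^ Suc n"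
  have ml: "a < 2 ^ mq n" "b < 2 ^ mq n" using ab by (auto simp: mq_def)
  have ag: "agree (set [0..<Suc n]) a b"
    unfolding agree_def using lt_pow_imp[OF ab(1)] lt_pow_imp[OF ab(2)] by auto
  have v: "val [0..<Suc n] a = a" "val [0..<Suc n] b = b" using ab by (simp_all only: val_upt mod_less)
  have c: "2 * pi * real a * real b / 2 ^ Suc n = pi * real b * real a / real ((2::nat)^n)"
    by (simp add: field_simps)
  have s: "(2::real) ^ Suc n = 2 * real ((2::nat) ^ n)" by simp
  show ?thesis using ml ag v by (simp only: DF_def index_mat(1) split length_upt Fv_def c s) (simp add: ac_simps)
qed


lemma FF_zero: "a < 2 ^ mq n \<Longrightarrow> b < 2 ^ mq n \<Longrightarrow> bit a (Suc n) \<Longrightarrow> \<not> bit b (Suc n) \<Longrightarrow> FF n $$ (a,b) = 0"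
proof -
  assume a: "a < 2 ^ mq n" "b < 2 ^ mq n" "bit a (Suc n)" "\<not> bit b (Suc n)"
  have "\<not> agree (set [0..<Suc n]) a b"
  proof
    assume "agree (set [0..<Suc n]) a b"
    hence "bit a (Suc n) = bit b (Suc n)" by (simp add: agree_def)
    thus False using a(3,4) by simp
  qed
  thus ?thesis using a(1,2) by (simp add: DF_def)
qed

lemma high_true: "(y::nat) < 2 ^ mq n \<Longrightarrow> \<not> y < 2 ^ Suc n \<Longrightarrow> bit y (Suc n)"
proof -
  assume a: "y < 2 ^ mq n" "\<not> y < 2 ^ Suc n"
  have "\<not> (\<forall>j\<ge>Suc n. \<not> bit y j)" using a(2) lt_pow_iff[of y "Suc n"] by simp
  then obtain j where j: "j \<ge> Suc n" "bit y j" by auto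
  have "j < mq n"
  proof (rule ccontr)
    assume "\<not> j < mq n"
    hence "\<not> bit y j" using lt_pow_imp[OF a(1)] by simp
    thus False using j(2) by simp
  qed
  hence "j = Suc n" using j(1) by (simp add: mq_def)
  thus ?thesis using j(2) by simp
qed

lemma ana': "N > 0 \<Longrightarrow> x < 2 * N \<Longrightarrow> y < 2 * N \<Longrightarrow>
  complex_of_real (c0 N y) * (Fv N (p0 N y) (p0 N x) * complex_of_real (c0 N x) + Fv N (p0 N y) (p1 N x) * complex_of_real (c1 N x)) +
  complex_of_real (c1 N y) * (Fv N (p1 N y) (p0 N x) * complex_of_real (c0 N x) + Fv N (p1 N y) (p1 N x) * complex_of_real (c1 N x))
  = Wv N y x"
proof -
  assume a: "N > 0" "x < 2 * N" "y < 2 * N"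
  have c: "\<And>a b. Fv N a b * complex_of_real (c0 N x) = complex_of_real (c0 N x) * Fv N a b"
     "\<And>a b. Fv N a b * complex_of_real (c1 N x) = complex_of_real (c1 N x) * Fv N a b" by (simp_all add: mult.commute)
  show ?thesis unfolding c by (rule ana[OF a])
qed

lemma main_ent: "x < 2 ^ Suc n \<Longrightarrow> y < 2 ^ mq n \<Longrightarrow>
  circ (mq n) (full n) $$ (y,x) = (if y < 2 ^ Suc n then Wv (2^n) y x else 0)"
proof -
  assume x: "x < 2 ^ Suc n" and y: "y < 2 ^ mq n"
  have x2: "x < 2 ^ mq n" using x by (simp add: mq_def)
  note M = M_formula[OF x2 y]
  let ?N = "2^n :: nat"
  have px: "pf n (unset_bit n x) = p0 ?N x" "pf n (set_bit n x) = p1 ?N x"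
    unfolding unset_eq[OF x] set_eq[OF x] p0_def p1_def by (rule pf_low, simp, rule pf_high, simp)
  have rx: "x mod ?N < ?N" "(?N - x mod ?N) mod ?N < ?N" by simp_all
  have N2: "(2::nat) ^ Suc n = ?N + ?N" by simp
  have pxl: "p0 ?N x < 2 ^ Suc n" "p1 ?N x < 2 ^ Suc n" unfolding p0_def p1_def N2 using rx by linarith+
  show ?thesis
  proof (cases "y < 2 ^ Suc n")
    case True
    have py: "pf n (unset_bit n y) = p0 ?N y" "pf n (set_bit n y) = p1 ?N y"
      unfolding unset_eq[OF True] set_eq[OF True] p0_def p1_def by (rule pf_low, simp, rule pf_high, simp)
    have ry: "y mod ?N < ?N" "(?N - y mod ?N) mod ?N < ?N" by simp_all
    have pyl: "p0 ?N y < 2 ^ Suc n" "p1 ?N y < 2 ^ Suc n" unfolding p0_def p1_def N2 using ry by linarith+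
    have "circ (mq n) (full n) $$ (y,x) =
      complex_of_real (c0 ?N y) * (Fv ?N (p0 ?N y) (p0 ?N x) * complex_of_real (c0 ?N x) + Fv ?N (p0 ?N y) (p1 ?N x) * complex_of_real (c1 ?N x)) +
      complex_of_real (c1 ?N y) * (Fv ?N (p1 ?N y) (p0 ?N x) * complex_of_real (c0 ?N x) + Fv ?N (p1 ?N y) (p1 ?N x) * complex_of_real (c1 ?N x))"
      unfolding M Hm_x0[OF x] Hm_x1[OF x] Hm_x0[OF True] Hm_x1[OF True] px py
        FF_val[OF pyl(1) pxl(1)] FF_val[OF pyl(1) pxl(2)] FF_val[OF pyl(2) pxl(1)] FF_val[OF pyl(2) pxl(2)] ..
    also have "\<dots> = Wv ?N y x"
    proof (rule ana')
      show "0 < ?N" by simp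
      show "x < 2 * ?N" using x by simp
      show "y < 2 * ?N" using True by simp
    qed
    finally show ?thesis using True by simp
  next
    case False
    have hy: "bit y (Suc n)" using high_true[OF y False] .
    have yl: "unset_bit n y < 2 ^ mq n" "set_bit n y < 2 ^ mq n" using y mq_props by (auto simp: unset_bit_lt set_bit_lt)
    have pyl: "pf n (unset_bit n y) < 2 ^ mq n" "pf n (set_bit n y) < 2 ^ mq n" using yl mq_props by (auto simp: pf_lt)
    have pyb: "bit (pf n (unset_bit n y)) (Suc n)" "bit (pf n (set_bit n y)) (Suc n)"
      using hy by (simp_all add: bit_pf_out bub bsb)
    have pxl2: "pf n (unset_bit n x) < 2 ^ mq n" "pf n (set_bit n x) < 2 ^ mq n"
      unfolding px using pxl by (simp_all add: mq_def)
    have pxb: "\<not> bit (pf n (unset_bit n x)) (Suc n)" "\<not> bit (pf n (set_bit n x)) (Suc n)"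
      unfolding px by (rule high_false[OF pxl(1)], rule high_false[OF pxl(2)])
    show ?thesis unfolding M using False FF_zero pyl pyb pxl2 pxb by simp
  qed
qed

lemma W_ent: "N \<ge> 1 \<Longrightarrow> y < 2 * N \<Longrightarrow> x < 2 * N \<Longrightarrow>
  direct_sum (DCT1 N) (smult_mat \<i> (DST1 N)) $$ (y,x) = Wv N y x"
proof -
  assume a: "N \<ge> 1" "y < 2 * N" "x < 2 * N"
  have d: "dim_row (DCT1 N) = N + 1" "dim_col (DCT1 N) = N + 1" "dim_row (smult_mat \<i> (DST1 N)) = N - 1"
    "dim_col (smult_mat \<i> (DST1 N)) = N - 1"
    by (simp_all add: DCT1_def DST1_def)
  have b: "y < dim_row (DCT1 N) + dim_row (smult_mat \<i> (DST1 N))" "x < dim_col (DCT1 N) + dim_col (smult_mat \<i> (DST1 N))"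
    using a d by auto
  show ?thesis
  proof (cases "y \<le> N")
    case True
    thus ?thesis using a b d by (auto simp: direct_sum_def Wv_def DCT1_def)
  next
    case False
    have e1: "y - (N + 1) + 1 = y - N" using False by simp
    show ?thesis
    proof (cases "x \<le> N")
      case True thus ?thesis using a b d False by (auto simp: direct_sum_def Wv_def)
    next
      case False2: False
      have e2: "x - (N + 1) + 1 = x - N" using False2 by simp
      have l: "y - (N + 1) < N - 1" "x - (N + 1) < N - 1" using a False False2 by auto
      show ?thesis using a b d False False2 l
        by (simp add: direct_sum_def Wv_def DST1_def e1 e2 of_nat_diff)
    qed
  qed
qed

lemma gok_full: "\<forall>g\<in>set (full n). gok (mq n) g"
proof -
  have h: "\<forall>g\<in>set (Hcirc n). gok (mq n) g"
    using gok_addc[OF rA_props(1) rA_props(2)] gok_chc[OF mq_props(2) mq_props(1)]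
    by (auto simp: Hcirc_def)
  have p: "\<forall>g\<in>set (Pcirc n). gok (mq n) g"
  proof -
    have "\<forall>g\<in>set (caddc [0..<n] n). gok (mq n) g"
      by (rule gok_caddc) (auto simp: mq_def)
    moreover have "\<forall>g\<in>set (map (CX n) [0..<n]). gok (mq n) g" by (auto simp: mq_def)
    ultimately show ?thesis by (auto simp: Pcirc_def)
  qed
  have f: "\<forall>g\<in>set (Fcirc n). gok (mq n) g"
    unfolding Fcirc_def by (rule gok_dftc) (auto simp: mq_def)
  show ?thesis using h p f by (auto simp: full_def)
qed

lemma length_full: "n \<ge> 1 \<Longrightarrow> length (full n) \<le> 200 * n ^ 2"
proof -
  assume n: "n \<ge> 1"
  have h: "length (Hcirc n) \<le> 2 * (6 * (n+1)^2 + (n+1)) + 3"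
    using length_addc[of "rA n" "2^n+1"] length_addc[of "rA n" "2^n-1"] rA_props(3)[of n]
    by (simp add: Hcirc_def chc_def)
  have p: "length (Pcirc n) \<le> 6 * n^2 + 6 * n"
    using length_caddc[of "[0..<n]" n] by (simp add: Pcirc_def)
  have f: "length (Fcirc n) \<le> 3 * (n+1)^2 + 3 * (n+1)"
    using length_dftc[of "[0..<Suc n]"] by (simp add: Fcirc_def)
  have "length (full n) = 2 * length (Hcirc n) + 2 * length (Pcirc n) + length (Fcirc n)"
    by (simp add: full_def)
  also have "\<dots> \<le> 2 * (2 * (6 * (n+1)^2 + (n+1)) + 3) + 2 * (6 * n^2 + 6 * n) + (3 * (n+1)^2 + 3 * (n+1))"
    using add_le_mono[OF add_le_mono[OF mult_le_mono2[OF h] mult_le_mono2[OF p]] f] .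
  also have "\<dots> \<le> 200 * n ^ 2"
  proof -
    have a1: "n \<le> n * n" using n by simp
    have a2: "1 \<le> n * n" using n by simp
    have e: "(n+1)^2 = n*n + 2*n + 1" "n^2 = n*n" by (simp_all add: power2_eq_square algebra_simps)
    have q: "2 * (2 * (6 * (n*n + 2 * n + 1) + (n + 1)) + 3) + 2 * (6 * (n*n) + 6 * n) +
       (3 * (n*n + 2 * n + 1) + 3 * (n + 1)) = 39 * (n*n) + 73 * n + 40" by (simp add: algebra_simps)
    have "39 * (n*n) + 73 * n + 40 \<le> 200 * (n*n)" using a1 a2 by linarith
    thus ?thesis unfolding e q .
  qed
  finally show ?thesis .
qed

lemma realize: "n \<ge> 1 \<Longrightarrow> realizes_with_ancillas (n + 1) 1 (map (gmat (mq n)) (full n))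
   (direct_sum (DCT1 (2 ^ n)) (smult_mat \<i> (DST1 (2 ^ n))))"
proof -
  assume n: "n \<ge> 1"
  have m: "n + 1 + 1 = mq n" by (simp add: mq_def)
  show ?thesis unfolding realizes_with_ancillas_def m
  proof (intro conjI allI impI ballI)
    fix g assume "g \<in> set (map (gmat (mq n)) (full n))"
    thus "elementary_gate (mq n) g" using gok_full gmat_elem by auto
  next
    fix x y :: nat assume x: "x < 2 ^ (n + 1)" and y: "y < 2 ^ mq n"
    have x': "x < 2 ^ Suc n" using x by simp
    have cp: "circuit_product (2 ^ mq n) (map (gmat (mq n)) (full n)) = circ (mq n) (full n)" by (simp add: circ_def)
    show "circuit_product (2 ^ mq n) (map (gmat (mq n)) (full n)) $$ (y, x) =
      (if y < 2 ^ (n + 1) then direct_sum (DCT1 (2 ^ n)) (smult_mat \<i> (DST1 (2 ^ n))) $$ (y, x) else 0)"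
    proof (cases "y < 2 ^ (n + 1)")
      case True
      have "direct_sum (DCT1 (2 ^ n)) (smult_mat \<i> (DST1 (2 ^ n))) $$ (y, x) = Wv (2^n) y x"
        by (rule W_ent) (use True x in auto)
      thus ?thesis unfolding cp main_ent[OF x' y] using True by simp
    next
      case False thus ?thesis unfolding cp main_ent[OF x' y] by simp
    qed
  qed
qed

theorem mainTheorem1:
  shows "\<exists>(c::real) > 0. \<exists>A::nat. \<forall>n::nat. n \<ge> 1 \<longrightarrow>
     (\<exists>a \<le> A. \<exists>gs. realizes_with_ancillas (n + 1) a gs
          (direct_sum (DCT1 (2 ^ n)) (smult_mat \<i> (DST1 (2 ^ n))))
        \<and> real (length gs) \<le> c * real n ^ 2)"
proof -
  have H: "\<forall>n::nat. n \<ge> 1 \<longrightarrow>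
     (\<exists>a \<le> (1::nat). \<exists>gs. realizes_with_ancillas (n + 1) a gs
          (direct_sum (DCT1 (2 ^ n)) (smult_mat \<i> (DST1 (2 ^ n))))
        \<and> real (length gs) \<le> 200 * real n ^ 2)"
  proof (intro allI impI)
    fix n :: nat assume n: "n \<ge> 1"
    have l: "real (length (map (gmat (mq n)) (full n))) \<le> 200 * real n ^ 2"
    proof -
      have "length (map (gmat (mq n)) (full n)) \<le> 200 * n ^ 2" using length_full[OF n] by simp
      hence "real (length (map (gmat (mq n)) (full n))) \<le> real (200 * n ^ 2)" by (simp only: of_nat_le_iff)
      thus ?thesis by simp
    qed
    show "\<exists>a \<le> (1::nat). \<exists>gs. realizes_with_ancillas (n + 1) a gs
          (direct_sum (DCT1 (2 ^ n)) (smult_mat \<i> (DST1 (2 ^ n))))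
        \<and> real (length gs) \<le> 200 * real n ^ 2"
    proof (rule exI[of _ "1::nat"], rule conjI)
      show "(1::nat) \<le> 1" by simp
      show "\<exists>gs. realizes_with_ancillas (n + 1) 1 gs
          (direct_sum (DCT1 (2 ^ n)) (smult_mat \<i> (DST1 (2 ^ n))))
        \<and> real (length gs) \<le> 200 * real n ^ 2"
        by (rule exI[of _ "map (gmat (mq n)) (full n)"]) (rule conjI[OF realize[OF n] l])
    qed
  qed
  show ?thesis
  proof (rule exI[of _ "200::real"], rule conjI)
    show "(200::real) > 0" by simp
    show "\<exists>A::nat. \<forall>n::nat. n \<ge> 1 \<longrightarrow>
     (\<exists>a \<le> A. \<exists>gs. realizes_with_ancillas (n + 1) a gs
          (direct_sum (DCT1 (2 ^ n)) (smult_mat \<i> (DST1 (2 ^ n))))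
        \<and> real (length gs) \<le> 200 * real n ^ 2)" by (rule exI[of _ 1]) (rule H)
  qed
qed


end
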